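(* Let $\Phi:\mathbb{R}^2\to\mathbb{R}^2$ be a jacobian map of the form $\Phi(x,y)=(ax+by+p(x,y),\,cx+dy+q(x,y))$ with $a,b,c,d\in\mathbb{R}$, $p,q$ real polynomials, $o(p)>1$, $o(q)>1$. Suppose one of the following holds: (i) $\max\{d(p),d(q)\}<o(p)+o(q)-1$; (ii) both $p$ and $q$ are even polynomials; (iii) $p$ is odd, $q$ is even, and $(p,q)$ satisfies the gap condition; (iv) $(p,q)$ satisfies the symmetric gap condition. Then $\Psi=\Phi\circ(J_\Phi(0,0))^{-1}$ is a shear map.
   Context: A jacobian map is a real polynomial map $\Phi:\mathbb{R}^2\to\mathbb{R}^2$ whose jacobian determinant $\det J_\Phi$ is a non-zero constant; $J_\Phi(0,0)$ denotes its jacobian matrix at the origin, viewed as a linear map. For a polynomial $P$, $d(P)$ is its degree and $o(P)$ its order (lowest degree of a monomial appearing in $P$). A polynomial is even if it is a sum of monomials of even degree, odd if it is a sum of monomials of odd degree. A non-negative integer is a gap of $P$ if it is the difference of the degrees of two distinct monomials of $P$; $G(P)$ denotes the set of gaps of $P$ (empty if $P$ has at most one monomial). The pair $(P,Q)$ satisfies the gap condition if for every monomial $M$ of $P$ one has $d(M)-1\notin G(Q)$; it satisfies the symmetric gap condition if both $(P,Q)$ and $(Q,P)$ satisfy the gap condition. A polynomial map is a shear map if its nonlinear terms are linear combinations of powers of a single homogeneous polynomial of degree 1, i.e. there is a linear form $\ell(x,y)$ such that each component of the map, after removing its terms of degree $\le 1$, is a real linear combination of $\ell^i$, $i\ge 2$.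 *)

theory Defs
  imports Complex_Main "HOL-Library.Extended_Nat"
begin

text \<open>Real polynomials in two variables x, y, represented by their coefficient
  function: P (i,j) is the coefficient of the monomial x^i y^j.  A genuine
  polynomial has finitely many nonzero coefficients (assumption poly2).\<close>

type_synonym poly2 = "nat \<times> nat \<Rightarrow> real"

definition supp2 :: "poly2 \<Rightarrow> (nat \<times> nat) set" where
  "supp2 P = {m. P m \<noteq> 0}"

definition poly2 :: "poly2 \<Rightarrow> bool" where
  "poly2 P \<longleftrightarrow> finite (supp2 P)"

definition mdeg :: "nat \<times> nat \<Rightarrow> nat" where
  "mdeg m = fst m + snd m"

definition eval2 :: "poly2 \<Rightarrow> real \<Rightarrow> real \<Rightarrow> real" where
  "eval2 P x y = (\<Sum>m\<in>supp2 P. P m * x ^ fst m * y ^ snd m)"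

definition dx2 :: "poly2 \<Rightarrow> poly2" where
  "dx2 P = (\<lambda>(i,j). real (Suc i) * P (Suc i, j))"

definition dy2 :: "poly2 \<Rightarrow> poly2" where
  "dy2 P = (\<lambda>(i,j). real (Suc j) * P (i, Suc j))"

text \<open>Degree (0 for the zero polynomial) and order (infinity for the zero polynomial).\<close>
definition deg2 :: "poly2 \<Rightarrow> nat" where
  "deg2 P = (if supp2 P = {} then 0 else Max (mdeg ` supp2 P))"

definition ord2 :: "poly2 \<Rightarrow> enat" where
  "ord2 P = (if supp2 P = {} then \<infinity> else enat (Min (mdeg ` supp2 P)))"

definition even2 :: "poly2 \<Rightarrow> bool" where
  "even2 P \<longleftrightarrow> (\<forall>m\<in>supp2 P. even (mdeg m))"

definition odd2 :: "poly2 \<Rightarrow> bool" where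
  "odd2 P \<longleftrightarrow> (\<forall>m\<in>supp2 P. odd (mdeg m))"

definition gaps :: "poly2 \<Rightarrow> int set" where
  "gaps P = {\<bar>int (mdeg m1) - int (mdeg m2)\<bar> | m1 m2. m1 \<in> supp2 P \<and> m2 \<in> supp2 P \<and> m1 \<noteq> m2}"

definition gap_condition :: "poly2 \<Rightarrow> poly2 \<Rightarrow> bool" where
  "gap_condition P Q \<longleftrightarrow> (\<forall>m\<in>supp2 P. int (mdeg m) - 1 \<notin> gaps Q)"

definition sym_gap_condition :: "poly2 \<Rightarrow> poly2 \<Rightarrow> bool" where
  "sym_gap_condition P Q \<longleftrightarrow> gap_condition P Q \<and> gap_condition Q P"

definition Phi :: "real \<Rightarrow> real \<Rightarrow> real \<Rightarrow> real \<Rightarrow> poly2 \<Rightarrow> poly2 \<Rightarrow> real \<times> real \<Rightarrow> real \<times> real" where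
  "Phi a b c d p q = (\<lambda>(x,y). (a*x + b*y + eval2 p x y, c*x + d*y + eval2 q x y))"

definition jac_det :: "real \<Rightarrow> real \<Rightarrow> real \<Rightarrow> real \<Rightarrow> poly2 \<Rightarrow> poly2 \<Rightarrow> real \<Rightarrow> real \<Rightarrow> real" where
  "jac_det a b c d p q x y =
     (a + eval2 (dx2 p) x y) * (d + eval2 (dy2 q) x y)
   - (b + eval2 (dy2 p) x y) * (c + eval2 (dx2 q) x y)"

definition jacobian_map :: "real \<Rightarrow> real \<Rightarrow> real \<Rightarrow> real \<Rightarrow> poly2 \<Rightarrow> poly2 \<Rightarrow> bool" where
  "jacobian_map a b c d p q \<longleftrightarrow> (\<exists>k. k \<noteq> 0 \<and> (\<forall>x y. jac_det a b c d p q x y = k))"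

definition jac0 :: "real \<Rightarrow> real \<Rightarrow> real \<Rightarrow> real \<Rightarrow> poly2 \<Rightarrow> poly2 \<Rightarrow> real \<times> real \<Rightarrow> real \<times> real" where
  "jac0 a b c d p q = (\<lambda>(x,y).
     ((a + eval2 (dx2 p) 0 0) * x + (b + eval2 (dy2 p) 0 0) * y,
      (c + eval2 (dx2 q) 0 0) * x + (d + eval2 (dy2 q) 0 0) * y))"

definition shear_map :: "(real \<times> real \<Rightarrow> real \<times> real) \<Rightarrow> bool" where
  "shear_map F \<longleftrightarrow> (\<exists>\<alpha> \<beta>. (\<alpha>, \<beta>) \<noteq> (0, 0) \<and>
     (\<exists>e1 f1 g1 e2 f2 g2 (c1::nat \<Rightarrow> real) (c2::nat \<Rightarrow> real) (N::nat).
       \<forall>u v. F (u, v) =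
         (e1 + f1*u + g1*v + (\<Sum>i=2..N. c1 i * (\<alpha>*u + \<beta>*v) ^ i),
          e2 + f2*u + g2*v + (\<Sum>i=2..N. c2 i * (\<alpha>*u + \<beta>*v) ^ i))))"

end

theory Submission
  imports Defs
begin


lemma eval2_sup:
  assumes "finite F" "supp2 P \<subseteq> F"
  shows "eval2 P x y = (\<Sum>m\<in>F. P m * x ^ fst m * y ^ snd m)"
  unfolding eval2_def
  by (rule sum.mono_neutral_left) (use assms in \<open>auto simp: supp2_def\<close>)

lemma poly2_box: assumes "poly2 P" obtains n where "supp2 P \<subseteq> {..n} \<times> {..n}"
proof -
  have f: "finite (supp2 P)" using assms by (simp add: poly2_def)
  define n where "n = Max (fst ` supp2 P \<union> snd ` supp2 P)"
  have "supp2 P \<subseteq> {..n} \<times> {..n}"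
  proof
    fix m assume "m \<in> supp2 P"
    then have "fst m \<le> n" "snd m \<le> n" unfolding n_def using f
      by (auto intro!: Max_ge)
    then show "m \<in> {..n} \<times> {..n}" by (cases m) auto
  qed
  then show ?thesis using that by blast
qed

lemma poly2_zero:
  assumes "poly2 P" and "\<And>x y. eval2 P x y = 0"
  shows "P m = 0"
proof -
  obtain n where n: "supp2 P \<subseteq> {..n} \<times> {..n}" using poly2_box[OF assms(1)] by blast
  have e: "eval2 P x y = (\<Sum>j\<le>n. (\<Sum>i\<le>n. P (i,j) * x ^ i) * y ^ j)" for x y
  proof -
    have "eval2 P x y = (\<Sum>m\<in>{..n} \<times> {..n}. P m * x ^ fst m * y ^ snd m)"
      by (rule eval2_sup) (use n in auto)
    also have "\<dots> = (\<Sum>i\<le>n. \<Sum>j\<le>n. P (i,j) * x ^ i * y ^ j)"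
      by (simp add: sum.cartesian_product split_def)
    also have "\<dots> = (\<Sum>j\<le>n. \<Sum>i\<le>n. P (i,j) * x ^ i * y ^ j)"
      by (rule sum.swap)
    also have "\<dots> = (\<Sum>j\<le>n. (\<Sum>i\<le>n. P (i,j) * x ^ i) * y ^ j)"
      by (simp add: sum_distrib_right)
    finally show ?thesis .
  qed
  have "\<forall>j\<le>n. (\<Sum>i\<le>n. P (i,j) * x ^ i) = 0" for x
  proof -
    have "\<forall>y. (\<Sum>j\<le>n. (\<Sum>i\<le>n. P (i,j) * x ^ i) * y ^ j) = 0" using assms(2) e by simp
    then show ?thesis using polyfun_eq_0[of "\<lambda>j. \<Sum>i\<le>n. P (i,j) * x ^ i" n] by blast
  qed
  then have h: "\<forall>i\<le>n. P (i,j) = 0" if "j \<le> n" for j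
    using that polyfun_eq_0[of "\<lambda>i. P (i,j)" n] by (metis (no_types, lifting) mult.commute)
  show ?thesis
  proof (cases "m \<in> {..n} \<times> {..n}")
    case True then show ?thesis using h by (cases m) auto
  next
    case False then show ?thesis using n by (auto simp: supp2_def)
  qed
qed

lemma poly2_eq:
  assumes "poly2 P" "poly2 Q" "\<And>x y. eval2 P x y = eval2 Q x y"
  shows "P = Q"
proof -
  have fin: "finite (supp2 P \<union> supp2 Q)" using assms by (simp add: poly2_def)
  have "poly2 (\<lambda>m. P m - Q m)"
    unfolding poly2_def by (rule finite_subset[OF _ fin]) (auto simp: supp2_def)
  moreover have "eval2 (\<lambda>m. P m - Q m) x y = 0" for x y
  proof -
    have "eval2 (\<lambda>m. P m - Q m) x y = (\<Sum>m\<in>supp2 P \<union> supp2 Q. (P m - Q m) * x ^ fst m * y ^ snd m)"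
      by (rule eval2_sup[OF fin]) (auto simp: supp2_def)
    also have "\<dots> = (\<Sum>m\<in>supp2 P \<union> supp2 Q. P m * x ^ fst m * y ^ snd m) - (\<Sum>m\<in>supp2 P \<union> supp2 Q. Q m * x ^ fst m * y ^ snd m)"
      by (simp add: sum_subtractf left_diff_distrib)
    also have "\<dots> = eval2 P x y - eval2 Q x y"
      using eval2_sup[OF fin, of P] eval2_sup[OF fin, of Q] by auto
    finally show ?thesis using assms(3) by simp
  qed
  ultimately show ?thesis using poly2_zero by fastforce
qed



lemma poly2_dx2: "poly2 P \<Longrightarrow> poly2 (dx2 P)"
proof -
  assume "poly2 P"
  then have f: "finite ((\<lambda>(i,j). (i - 1, j)) ` supp2 P)" by (simp add: poly2_def)
  show ?thesis unfolding poly2_def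
    by (rule finite_subset[OF _ f]) (force simp: supp2_def dx2_def)
qed

lemma poly2_dy2: "poly2 P \<Longrightarrow> poly2 (dy2 P)"
proof -
  assume "poly2 P"
  then have f: "finite ((\<lambda>(i,j). (i, j - 1)) ` supp2 P)" by (simp add: poly2_def)
  show ?thesis unfolding poly2_def
    by (rule finite_subset[OF _ f]) (force simp: supp2_def dx2_def dy2_def)
qed

lemma eval_dx2:
  assumes "poly2 P"
  shows "eval2 (dx2 P) x y = (\<Sum>m\<in>supp2 P. P m * real (fst m) * x ^ (fst m - 1) * y ^ snd m)"
proof -
  define S' where "S' = {m\<in>supp2 P. fst m \<ge> 1}"
  define h where "h = (\<lambda>m::nat\<times>nat. (fst m - 1, snd m))"
  have fS: "finite (supp2 P)" using assms by (simp add: poly2_def)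
  have fS': "finite S'" using fS by (simp add: S'_def)
  have inj: "inj_on h S'" unfolding inj_on_def h_def S'_def by (auto simp: prod_eq_iff)
  have "eval2 (dx2 P) x y = (\<Sum>m\<in>h ` S'. dx2 P m * x ^ fst m * y ^ snd m)"
  proof (rule eval2_sup)
    show "finite (h ` S')" using fS' by simp
    show "supp2 (dx2 P) \<subseteq> h ` S'"
    proof
      fix m assume "m \<in> supp2 (dx2 P)"
      then have "(Suc (fst m), snd m) \<in> S'" by (cases m) (auto simp: supp2_def dx2_def S'_def)
      moreover have "m = h (Suc (fst m), snd m)" by (simp add: h_def)
      ultimately show "m \<in> h ` S'" by blast
    qed
  qed
  also have "\<dots> = (\<Sum>m\<in>S'. dx2 P (h m) * x ^ fst (h m) * y ^ snd (h m))"
    by (rule sum.reindex[OF inj, unfolded comp_def])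
  also have "\<dots> = (\<Sum>m\<in>S'. P m * real (fst m) * x ^ (fst m - 1) * y ^ snd m)"
  proof (rule sum.cong[OF refl])
    fix m assume "m \<in> S'"
    then obtain i j where m: "m = (Suc i, j)" unfolding S'_def by (cases m; cases "fst m"; cases "snd m") auto
    show "dx2 P (h m) * x ^ fst (h m) * y ^ snd (h m) = P m * real (fst m) * x ^ (fst m - 1) * y ^ snd m"
      by (simp add: m h_def dx2_def)
  qed
  also have "\<dots> = (\<Sum>m\<in>supp2 P. P m * real (fst m) * x ^ (fst m - 1) * y ^ snd m)"
    by (rule sum.mono_neutral_left) (use fS in \<open>auto simp: S'_def\<close>)
  finally show ?thesis .
qed

lemma eval_dy2:
  assumes "poly2 P"
  shows "eval2 (dy2 P) x y = (\<Sum>m\<in>supp2 P. P m * real (snd m) * x ^ fst m * y ^ (snd m - 1))"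
proof -
  define S' where "S' = {m\<in>supp2 P. snd m \<ge> 1}"
  define h where "h = (\<lambda>m::nat\<times>nat. (fst m, snd m - 1))"
  have fS: "finite (supp2 P)" using assms by (simp add: poly2_def)
  have fS': "finite S'" using fS by (simp add: S'_def)
  have inj: "inj_on h S'" unfolding inj_on_def h_def S'_def by (auto simp: prod_eq_iff)
  have "eval2 (dy2 P) x y = (\<Sum>m\<in>h ` S'. dy2 P m * x ^ fst m * y ^ snd m)"
  proof (rule eval2_sup)
    show "finite (h ` S')" using fS' by simp
    show "supp2 (dy2 P) \<subseteq> h ` S'"
    proof
      fix m assume "m \<in> supp2 (dy2 P)"
      then have "(fst m, Suc (snd m)) \<in> S'" by (cases m) (auto simp: supp2_def dy2_def S'_def)
      moreover have "m = h (fst m, Suc (snd m))" by (simp add: h_def)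
      ultimately show "m \<in> h ` S'" by blast
    qed
  qed
  also have "\<dots> = (\<Sum>m\<in>S'. dy2 P (h m) * x ^ fst (h m) * y ^ snd (h m))"
    by (rule sum.reindex[OF inj, unfolded comp_def])
  also have "\<dots> = (\<Sum>m\<in>S'. P m * real (snd m) * x ^ fst m * y ^ (snd m - 1))"
  proof (rule sum.cong[OF refl])
    fix m assume "m \<in> S'"
    then obtain i j where m: "m = (i, Suc j)" unfolding S'_def by (cases m; cases "fst m"; cases "snd m") auto
    show "dy2 P (h m) * x ^ fst (h m) * y ^ snd (h m) = P m * real (snd m) * x ^ fst m * y ^ (snd m - 1)"
      by (simp add: m h_def dy2_def)
  qed
  also have "\<dots> = (\<Sum>m\<in>supp2 P. P m * real (snd m) * x ^ fst m * y ^ (snd m - 1))"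
    by (rule sum.mono_neutral_left) (use fS in \<open>auto simp: S'_def\<close>)
  finally show ?thesis .
qed

lemma DERIV_eval_x:
  assumes "poly2 P"
  shows "((\<lambda>x. eval2 P x y) has_real_derivative eval2 (dx2 P) x y) (at x)"
  unfolding eval_dx2[OF assms] eval2_def[of P]
  by (rule DERIV_sum) (auto intro!: derivative_eq_intros)

lemma DERIV_eval_y:
  assumes "poly2 P"
  shows "((\<lambda>y. eval2 P x y) has_real_derivative eval2 (dy2 P) x y) (at y)"
  unfolding eval_dy2[OF assms] eval2_def[of P]
  by (rule DERIV_sum) (auto intro!: derivative_eq_intros)

definition lin2 :: "real \<Rightarrow> poly2 \<Rightarrow> real \<Rightarrow> poly2 \<Rightarrow> poly2" where
  "lin2 \<alpha> P \<beta> Q = (\<lambda>m. \<alpha> * P m + \<beta> * Q m)"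

lemma poly2_lin2: "poly2 P \<Longrightarrow> poly2 Q \<Longrightarrow> poly2 (lin2 \<alpha> P \<beta> Q)"
  unfolding poly2_def lin2_def
  by (rule finite_subset[of _ "supp2 P \<union> supp2 Q"]) (auto simp: supp2_def)

lemma eval_lin2:
  assumes "poly2 P" "poly2 Q"
  shows "eval2 (lin2 \<alpha> P \<beta> Q) x y = \<alpha> * eval2 P x y + \<beta> * eval2 Q x y"
proof -
  have fin: "finite (supp2 P \<union> supp2 Q)" using assms by (simp add: poly2_def)
  have "eval2 (lin2 \<alpha> P \<beta> Q) x y = (\<Sum>m\<in>supp2 P \<union> supp2 Q. (\<alpha> * P m + \<beta> * Q m) * x ^ fst m * y ^ snd m)"
    unfolding lin2_def by (rule eval2_sup[OF fin]) (auto simp: supp2_def)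
  also have "\<dots> = \<alpha> * (\<Sum>m\<in>supp2 P \<union> supp2 Q. P m * x ^ fst m * y ^ snd m) + \<beta> * (\<Sum>m\<in>supp2 P \<union> supp2 Q. Q m * x ^ fst m * y ^ snd m)"
    by (simp add: sum.distrib sum_distrib_left algebra_simps)
  also have "\<dots> = \<alpha> * eval2 P x y + \<beta> * eval2 Q x y"
    using eval2_sup[OF fin, of P] eval2_sup[OF fin, of Q] by auto
  finally show ?thesis .
qed

lemma dx2_lin2: "dx2 (lin2 \<alpha> P \<beta> Q) = lin2 \<alpha> (dx2 P) \<beta> (dx2 Q)"
  by (auto simp: dx2_def lin2_def fun_eq_iff algebra_simps)

lemma dy2_lin2: "dy2 (lin2 \<alpha> P \<beta> Q) = lin2 \<alpha> (dy2 P) \<beta> (dy2 Q)"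
  by (auto simp: dy2_def lin2_def fun_eq_iff algebra_simps)



definition gconv :: "(nat\<times>nat \<Rightarrow> nat\<times>nat \<Rightarrow> nat\<times>nat) \<Rightarrow> (nat\<times>nat \<Rightarrow> nat\<times>nat \<Rightarrow> real) \<Rightarrow> poly2 \<Rightarrow> poly2 \<Rightarrow> poly2" where
  "gconv e w P Q \<mu> = (\<Sum>z\<in>{z\<in>supp2 P \<times> supp2 Q. e (fst z) (snd z) = \<mu>}. w (fst z) (snd z) * P (fst z) * Q (snd z))"

lemma poly2_gconv:
  assumes "poly2 P" "poly2 Q" shows "poly2 (gconv e w P Q)"
proof -
  have f: "finite ((\<lambda>z. e (fst z) (snd z)) ` (supp2 P \<times> supp2 Q))" using assms by (simp add: poly2_def)
  show ?thesis unfolding poly2_def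
  proof (rule finite_subset[OF _ f])
    show "supp2 (gconv e w P Q) \<subseteq> (\<lambda>z. e (fst z) (snd z)) ` (supp2 P \<times> supp2 Q)"
    proof
      fix \<mu> assume "\<mu> \<in> supp2 (gconv e w P Q)"
      then have "gconv e w P Q \<mu> \<noteq> 0" by (simp add: supp2_def)
      then have "{z\<in>supp2 P \<times> supp2 Q. e (fst z) (snd z) = \<mu>} \<noteq> {}"
        unfolding gconv_def by (metis (no_types, lifting) sum.empty)
      then show "\<mu> \<in> (\<lambda>z. e (fst z) (snd z)) ` (supp2 P \<times> supp2 Q)" by blast
    qed
  qed
qed

lemma eval_gconv:
  assumes "poly2 P" "poly2 Q"
  shows "eval2 (gconv e w P Q) x y = (\<Sum>z\<in>supp2 P \<times> supp2 Q. w (fst z) (snd z) * P (fst z) * Q (snd z) * x ^ fst (e (fst z) (snd z)) * y ^ snd (e (fst z) (snd z)))"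
proof -
  define S where "S = supp2 P \<times> supp2 Q"
  define g where "g = (\<lambda>z. e (fst z) (snd z))"
  have fS: "finite S" using assms by (simp add: poly2_def S_def)
  have sub: "supp2 (gconv e w P Q) \<subseteq> g ` S"
  proof
    fix \<mu> assume "\<mu> \<in> supp2 (gconv e w P Q)"
    then have "gconv e w P Q \<mu> \<noteq> 0" by (simp add: supp2_def)
    then have "{z\<in>supp2 P \<times> supp2 Q. e (fst z) (snd z) = \<mu>} \<noteq> {}"
      unfolding gconv_def by (metis (no_types, lifting) sum.empty)
    then obtain z where "z \<in> supp2 P \<times> supp2 Q" "e (fst z) (snd z) = \<mu>" by blast
    then show "\<mu> \<in> g ` S" unfolding g_def S_def by (metis (no_types, lifting) image_eqI)
  qed
  have "eval2 (gconv e w P Q) x y = (\<Sum>\<mu>\<in>g ` S. gconv e w P Q \<mu> * x ^ fst \<mu> * y ^ snd \<mu>)"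
    by (rule eval2_sup[OF _ sub]) (use fS in simp)
  also have "\<dots> = (\<Sum>\<mu>\<in>g ` S. \<Sum>z\<in>{z\<in>S. g z = \<mu>}. w (fst z) (snd z) * P (fst z) * Q (snd z) * x ^ fst (g z) * y ^ snd (g z))"
    unfolding gconv_def S_def g_def by (auto simp: sum_distrib_right intro!: sum.cong)
  also have "\<dots> = (\<Sum>z\<in>S. w (fst z) (snd z) * P (fst z) * Q (snd z) * x ^ fst (g z) * y ^ snd (g z))"
    by (rule sum.image_gen[OF fS, symmetric])
  finally show ?thesis by (simp add: S_def g_def)
qed

lemma eval_shift:
  assumes "poly2 P" and "\<And>i j. i < a \<or> j < b \<Longrightarrow> f (i,j) = 0"
  shows "eval2 (\<lambda>(i,j). f (i+a, j+b) * P (i+a, j+b)) x y = (\<Sum>m\<in>supp2 P. f m * P m * x ^ (fst m - a) * y ^ (snd m - b))"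
proof -
  define S' where "S' = {m\<in>supp2 P. fst m \<ge> a \<and> snd m \<ge> b}"
  define h where "h = (\<lambda>m::nat\<times>nat. (fst m - a, snd m - b))"
  define R where "R = (\<lambda>(i,j). f (i+a, j+b) * P (i+a, j+b))"
  have fS: "finite (supp2 P)" using assms by (simp add: poly2_def)
  have fS': "finite S'" using fS by (simp add: S'_def)
  have inj: "inj_on h S'" unfolding inj_on_def h_def S'_def by (auto simp: prod_eq_iff)
  have "eval2 R x y = (\<Sum>m\<in>h ` S'. R m * x ^ fst m * y ^ snd m)"
  proof (rule eval2_sup)
    show "finite (h ` S')" using fS' by simp
    show "supp2 R \<subseteq> h ` S'"
    proof
      fix m assume "m \<in> supp2 R"
      then have "(fst m + a, snd m + b) \<in> S'" by (cases m) (auto simp: supp2_def R_def S'_def)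
      moreover have "m = h (fst m + a, snd m + b)" by (simp add: h_def)
      ultimately show "m \<in> h ` S'" by blast
    qed
  qed
  also have "\<dots> = (\<Sum>m\<in>S'. R (h m) * x ^ fst (h m) * y ^ snd (h m))"
    by (rule sum.reindex[OF inj, unfolded comp_def])
  also have "\<dots> = (\<Sum>m\<in>S'. f m * P m * x ^ (fst m - a) * y ^ (snd m - b))"
    by (rule sum.cong[OF refl]) (auto simp: S'_def R_def h_def)
  also have "\<dots> = (\<Sum>m\<in>supp2 P. f m * P m * x ^ (fst m - a) * y ^ (snd m - b))"
  proof (rule sum.mono_neutral_left)
    show "finite (supp2 P)" by (rule fS)
    show "S' \<subseteq> supp2 P" by (auto simp: S'_def)
    show "\<forall>m\<in>supp2 P - S'. f m * P m * x ^ (fst m - a) * y ^ (snd m - b) = 0"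
    proof
      fix m assume "m \<in> supp2 P - S'"
      then have "fst m < a \<or> snd m < b" by (auto simp: S'_def)
      then have "f m = 0" using assms(2)[of "fst m" "snd m"] by simp
      then show "f m * P m * x ^ (fst m - a) * y ^ (snd m - b) = 0" by simp
    qed
  qed
  finally show ?thesis by (simp add: R_def)
qed

lemma dxx_eq: "dx2 (dx2 K) = (\<lambda>(i,j). (\<lambda>(i,j). real i * (real i - 1)) (i+2, j+0) * K (i+2, j+0))"
  by (auto simp: dx2_def fun_eq_iff algebra_simps numeral_2_eq_2)
lemma dyy_eq: "dy2 (dy2 K) = (\<lambda>(i,j). (\<lambda>(i,j). real j * (real j - 1)) (i+0, j+2) * K (i+0, j+2))"
  by (auto simp: dy2_def fun_eq_iff algebra_simps numeral_2_eq_2)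
lemma dxy_eq: "dx2 (dy2 K) = (\<lambda>(i,j). (\<lambda>(i,j). real i * real j) (i+1, j+1) * K (i+1, j+1))"
  by (auto simp: dy2_def dx2_def fun_eq_iff algebra_simps)
lemma dx_eq: "dx2 K = (\<lambda>(i,j). (\<lambda>(i,j). real i) (i+1, j+0) * K (i+1, j+0))"
  by (auto simp: dx2_def fun_eq_iff algebra_simps)
lemma dy_eq: "dy2 K = (\<lambda>(i,j). (\<lambda>(i,j). real j) (i+0, j+1) * K (i+0, j+1))"
  by (auto simp: dy2_def fun_eq_iff algebra_simps)

lemma eval_dxx: "poly2 K \<Longrightarrow> eval2 (dx2 (dx2 K)) x y = (\<Sum>m\<in>supp2 K. real (fst m) * (real (fst m) - 1) * K m * x ^ (fst m - 2) * y ^ snd m)"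
  unfolding dxx_eq by (subst eval_shift) (auto simp: split_def less_2_cases_iff)
lemma eval_dyy: "poly2 K \<Longrightarrow> eval2 (dy2 (dy2 K)) x y = (\<Sum>m\<in>supp2 K. real (snd m) * (real (snd m) - 1) * K m * x ^ fst m * y ^ (snd m - 2))"
  unfolding dyy_eq by (subst eval_shift) (auto simp: split_def less_2_cases_iff)
lemma eval_dxy: "poly2 K \<Longrightarrow> eval2 (dx2 (dy2 K)) x y = (\<Sum>m\<in>supp2 K. real (fst m) * real (snd m) * K m * x ^ (fst m - 1) * y ^ (snd m - 1))"
  unfolding dxy_eq by (subst eval_shift) (auto simp: split_def)
lemma eval_dx: "poly2 K \<Longrightarrow> eval2 (dx2 K) x y = (\<Sum>m\<in>supp2 K. real (fst m) * K m * x ^ (fst m - 1) * y ^ snd m)"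
  unfolding dx_eq by (subst eval_shift) (auto simp: split_def)
lemma eval_dy: "poly2 K \<Longrightarrow> eval2 (dy2 K) x y = (\<Sum>m\<in>supp2 K. real (snd m) * K m * x ^ fst m * y ^ (snd m - 1))"
  unfolding dy_eq by (subst eval_shift) (auto simp: split_def)



definition wH :: "nat\<times>nat \<Rightarrow> nat\<times>nat \<Rightarrow> real" where
  "wH m1 m2 = real (fst m1) * (real (fst m1) - 1) * real (snd m2) * (real (snd m2) - 1)
             - real (fst m1) * real (snd m1) * real (fst m2) * real (snd m2)"
definition eH :: "nat\<times>nat \<Rightarrow> nat\<times>nat \<Rightarrow> nat\<times>nat" where
  "eH m1 m2 = (fst m1 + fst m2 - 2, snd m1 + snd m2 - 2)"
definition HessP :: "poly2 \<Rightarrow> poly2" where "HessP K = gconv eH wH K K"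

definition wJ :: "nat\<times>nat \<Rightarrow> nat\<times>nat \<Rightarrow> real" where
  "wJ m1 m2 = real (fst m1) * real (snd m2) - real (snd m1) * real (fst m2)"
definition eJ :: "nat\<times>nat \<Rightarrow> nat\<times>nat \<Rightarrow> nat\<times>nat" where
  "eJ m1 m2 = (fst m1 + fst m2 - 1, snd m1 + snd m2 - 1)"
definition JP :: "poly2 \<Rightarrow> poly2 \<Rightarrow> poly2" where "JP P Q = gconv eJ wJ P Q"

lemma term_aux1:
  fixes x y k1 k2 :: real
  shows "real i1 * (real i1 - 1) * real j2 * (real j2 - 1) * k1 * k2 * x ^ (i1 + i2 - 2) * y ^ (j1 + j2 - 2)
       = (real i1 * (real i1 - 1) * k1 * x ^ (i1 - 2) * y ^ j1) * (real j2 * (real j2 - 1) * k2 * x ^ i2 * y ^ (j2 - 2))"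
proof (cases "i1 \<ge> 2 \<and> j2 \<ge> 2")
  case True
  then obtain a b where "i1 = a + 2" "j2 = b + 2" by (metis add.commute le_add_diff_inverse)
  then show ?thesis by (simp add: power_add algebra_simps)
next
  case False
  then have "real i1 * (real i1 - 1) = 0 \<or> real j2 * (real j2 - 1) = 0"
    by (auto simp: not_le less_2_cases_iff)
  then show ?thesis by auto
qed

lemma term_aux2:
  fixes x y k1 k2 :: real
  shows "real i1 * real j1 * real i2 * real j2 * k1 * k2 * x ^ (i1 + i2 - 2) * y ^ (j1 + j2 - 2)
       = (real i1 * real j1 * k1 * x ^ (i1 - 1) * y ^ (j1 - 1)) * (real i2 * real j2 * k2 * x ^ (i2 - 1) * y ^ (j2 - 1))"
proof (cases "i1 \<ge> 1 \<and> j1 \<ge> 1 \<and> i2 \<ge> 1 \<and> j2 \<ge> 1")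
  case True
  then obtain a b c d where "i1 = a + 1" "j1 = b + 1" "i2 = c + 1" "j2 = d + 1"
    by (metis add.commute le_add_diff_inverse)
  then show ?thesis by (simp add: power_add algebra_simps)
next
  case False
  then show ?thesis by auto
qed

lemma term_aux3:
  fixes x y k1 k2 :: real
  shows "real i1 * real j2 * k1 * k2 * x ^ (i1 + i2 - 1) * y ^ (j1 + j2 - 1)
       = (real i1 * k1 * x ^ (i1 - 1) * y ^ j1) * (real j2 * k2 * x ^ i2 * y ^ (j2 - 1))"
proof (cases "i1 \<ge> 1 \<and> j2 \<ge> 1")
  case True
  then obtain a b where "i1 = a + 1" "j2 = b + 1" by (metis add.commute le_add_diff_inverse)
  then show ?thesis by (simp add: power_add algebra_simps)
next
  case False
  then show ?thesis by auto
qed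

lemma term_aux4:
  fixes x y k1 k2 :: real
  shows "real j1 * real i2 * k1 * k2 * x ^ (i1 + i2 - 1) * y ^ (j1 + j2 - 1)
       = (real j1 * k1 * x ^ i1 * y ^ (j1 - 1)) * (real i2 * k2 * x ^ (i2 - 1) * y ^ j2)"
proof (cases "j1 \<ge> 1 \<and> i2 \<ge> 1")
  case True
  then obtain a b where "j1 = a + 1" "i2 = b + 1" by (metis add.commute le_add_diff_inverse)
  then show ?thesis by (simp add: power_add algebra_simps)
next
  case False
  then show ?thesis by auto
qed

lemma poly2_HessP: "poly2 K \<Longrightarrow> poly2 (HessP K)"
  unfolding HessP_def by (rule poly2_gconv)
lemma poly2_JP: "poly2 P \<Longrightarrow> poly2 Q \<Longrightarrow> poly2 (JP P Q)"
  unfolding JP_def by (rule poly2_gconv)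

lemma eval_HessP:
  assumes "poly2 K"
  shows "eval2 (HessP K) x y = eval2 (dx2 (dx2 K)) x y * eval2 (dy2 (dy2 K)) x y - eval2 (dx2 (dy2 K)) x y * eval2 (dx2 (dy2 K)) x y"
proof -
  define S where "S = supp2 K"
  have "eval2 (dx2 (dx2 K)) x y * eval2 (dy2 (dy2 K)) x y - eval2 (dx2 (dy2 K)) x y * eval2 (dx2 (dy2 K)) x y
    = (\<Sum>z\<in>S \<times> S. (real (fst (fst z)) * (real (fst (fst z)) - 1) * K (fst z) * x ^ (fst (fst z) - 2) * y ^ snd (fst z)) *
                    (real (snd (snd z)) * (real (snd (snd z)) - 1) * K (snd z) * x ^ fst (snd z) * y ^ (snd (snd z) - 2))
                  - (real (fst (fst z)) * real (snd (fst z)) * K (fst z) * x ^ (fst (fst z) - 1) * y ^ (snd (fst z) - 1)) *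
                    (real (fst (snd z)) * real (snd (snd z)) * K (snd z) * x ^ (fst (snd z) - 1) * y ^ (snd (snd z) - 1)))"
    unfolding eval_dxx[OF assms] eval_dyy[OF assms] eval_dxy[OF assms] S_def[symmetric]
    by (simp add: sum_product sum.cartesian_product sum_subtractf split_def)
  also have "\<dots> = eval2 (HessP K) x y"
    unfolding HessP_def eval_gconv[OF assms assms] S_def[symmetric]
    by (rule sum.cong[OF refl]) (auto simp: wH_def eH_def left_diff_distrib term_aux1 term_aux2)
  finally show ?thesis by simp
qed

lemma eval_JP:
  assumes "poly2 P" "poly2 Q"
  shows "eval2 (JP P Q) x y = eval2 (dx2 P) x y * eval2 (dy2 Q) x y - eval2 (dy2 P) x y * eval2 (dx2 Q) x y"
proof -
  have "eval2 (dx2 P) x y * eval2 (dy2 Q) x y - eval2 (dy2 P) x y * eval2 (dx2 Q) x y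
    = (\<Sum>z\<in>supp2 P \<times> supp2 Q. (real (fst (fst z)) * P (fst z) * x ^ (fst (fst z) - 1) * y ^ snd (fst z)) *
                    (real (snd (snd z)) * Q (snd z) * x ^ fst (snd z) * y ^ (snd (snd z) - 1))
                  - (real (snd (fst z)) * P (fst z) * x ^ fst (fst z) * y ^ (snd (fst z) - 1)) *
                    (real (fst (snd z)) * Q (snd z) * x ^ (fst (snd z) - 1) * y ^ snd (snd z)))"
    unfolding eval_dx[OF assms(1)] eval_dy[OF assms(2)] eval_dx[OF assms(2)] eval_dy[OF assms(1)]
    by (simp add: sum_product sum.cartesian_product sum_subtractf split_def)
  also have "\<dots> = eval2 (JP P Q) x y"
    unfolding JP_def eval_gconv[OF assms]
    by (rule sum.cong[OF refl]) (simp only: wJ_def eJ_def fst_conv snd_conv left_diff_distrib term_aux3 term_aux4)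
  finally show ?thesis by simp
qed



definition LP :: "real \<Rightarrow> real \<Rightarrow> real \<Rightarrow> real \<Rightarrow> poly2 \<Rightarrow> poly2 \<Rightarrow> poly2" where
  "LP a b c d p q = lin2 1 (lin2 d (dx2 p) (-c) (dy2 p)) 1 (lin2 (-b) (dx2 q) a (dy2 q))"

lemma poly2_LP: "poly2 p \<Longrightarrow> poly2 q \<Longrightarrow> poly2 (LP a b c d p q)"
  unfolding LP_def by (intro poly2_lin2 poly2_dx2 poly2_dy2)

lemma eval_LP: "poly2 p \<Longrightarrow> poly2 q \<Longrightarrow> eval2 (LP a b c d p q) x y =
   d * eval2 (dx2 p) x y - c * eval2 (dy2 p) x y - b * eval2 (dx2 q) x y + a * eval2 (dy2 q) x y"
  unfolding LP_def
  by (simp add: eval_lin2 poly2_lin2 poly2_dx2 poly2_dy2)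

lemma LP_coeff: "LP a b c d p q m = d * dx2 p m - c * dy2 p m - b * dx2 q m + a * dy2 q m"
  by (simp add: LP_def lin2_def)

lemma ord_gt1: assumes "poly2 p" "ord2 p > 1" "m \<in> supp2 p" shows "mdeg m \<ge> 2"
proof -
  have ne: "supp2 p \<noteq> {}" using assms by auto
  then have "enat (Min (mdeg ` supp2 p)) > 1" using assms(2) by (simp add: ord2_def)
  then have "Min (mdeg ` supp2 p) \<ge> 2" by (simp add: one_enat_def)
  moreover have "Min (mdeg ` supp2 p) \<le> mdeg m"
    using assms(1,3) by (simp add: poly2_def)
  ultimately show ?thesis by simp
qed

lemma eval_d0:
  assumes "poly2 P" "\<And>m. m \<in> supp2 P \<Longrightarrow> mdeg m \<ge> 2"
  shows "eval2 (dx2 P) 0 0 = 0" "eval2 (dy2 P) 0 0 = 0"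
proof -
  have "real (fst m) * P m * 0 ^ (fst m - 1) * (0::real) ^ snd m = 0" if "m \<in> supp2 P" for m
    using assms(2)[OF that] by (cases m) (auto simp: mdeg_def)
  then show "eval2 (dx2 P) 0 0 = 0" unfolding eval_dx[OF assms(1)] by (rule sum.neutral[rule_format])
  have "real (snd m) * P m * 0 ^ fst m * (0::real) ^ (snd m - 1) = 0" if "m \<in> supp2 P" for m
    using assms(2)[OF that] by (cases m) (auto simp: mdeg_def)
  then show "eval2 (dy2 P) 0 0 = 0" unfolding eval_dy[OF assms(1)] by (rule sum.neutral[rule_format])
qed

lemma jac_split:
  assumes "poly2 p" "poly2 q" "jacobian_map a b c d p q" "ord2 p > 1" "ord2 q > 1"
  shows "a * d - b * c \<noteq> 0" "\<And>\<mu>. LP a b c d p q \<mu> + JP p q \<mu> = 0"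
proof -
  obtain k where k: "k \<noteq> 0" "\<And>x y. jac_det a b c d p q x y = k"
    using assms(3) by (auto simp: jacobian_map_def)
  have dp: "eval2 (dx2 p) 0 0 = 0" "eval2 (dy2 p) 0 0 = 0"
    using eval_d0[OF assms(1)] ord_gt1[OF assms(1,4)] by auto
  have dq: "eval2 (dx2 q) 0 0 = 0" "eval2 (dy2 q) 0 0 = 0"
    using eval_d0[OF assms(2)] ord_gt1[OF assms(2,5)] by auto
  have kk: "k = a * d - b * c" using k(2)[of 0 0] dp dq by (simp add: jac_det_def)
  then show "a * d - b * c \<noteq> 0" using k by simp
  define R where "R = lin2 1 (LP a b c d p q) 1 (JP p q)"
  have pR: "poly2 R" unfolding R_def by (intro poly2_lin2 poly2_LP poly2_JP assms)
  have "eval2 R x y = 0" for x y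
  proof -
    have "eval2 R x y = jac_det a b c d p q x y - (a * d - b * c)"
      unfolding R_def by (simp add: eval_lin2 poly2_LP poly2_JP assms eval_LP eval_JP jac_det_def algebra_simps)
    then show ?thesis using k(2) kk by simp
  qed
  then have "R \<mu> = 0" for \<mu> using poly2_zero[OF pR] by blast
  then show "LP a b c d p q \<mu> + JP p q \<mu> = 0" for \<mu> by (simp add: R_def lin2_def)
qed

definition Sep :: "poly2 \<Rightarrow> poly2 \<Rightarrow> bool" where
  "Sep p q \<longleftrightarrow> (\<forall>m1\<in>supp2 p. \<forall>m2\<in>supp2 q. \<forall>m\<in>supp2 p \<union> supp2 q. mdeg m + 1 \<noteq> mdeg m1 + mdeg m2)"

lemma separate:
  assumes "Sep p q" "\<And>\<mu>. LP a b c d p q \<mu> + JP p q \<mu> = 0"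
  shows "LP a b c d p q \<mu> = 0" "JP p q \<mu> = 0"
proof -
  have "LP a b c d p q \<mu> = 0 \<or> JP p q \<mu> = 0"
  proof (rule ccontr)
    assume "\<not> ?thesis"
    then have L: "LP a b c d p q \<mu> \<noteq> 0" and J: "JP p q \<mu> \<noteq> 0" by auto
    from J have "(\<Sum>z\<in>{z\<in>supp2 p \<times> supp2 q. eJ (fst z) (snd z) = \<mu>}. wJ (fst z) (snd z) * p (fst z) * q (snd z)) \<noteq> 0"
      unfolding JP_def gconv_def .
    then obtain z where z0: "z \<in> {z\<in>supp2 p \<times> supp2 q. eJ (fst z) (snd z) = \<mu>}"
       and z3: "wJ (fst z) (snd z) * p (fst z) * q (snd z) \<noteq> 0"
      by (rule sum.not_neutral_contains_not_neutral)
    from z0 have z: "z \<in> supp2 p \<times> supp2 q" "eJ (fst z) (snd z) = \<mu>" by auto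
    obtain i1 j1 i2 j2 where zz: "z = ((i1,j1),(i2,j2))" by (metis prod.collapse)
    from z3 have "wJ (i1,j1) (i2,j2) \<noteq> 0" by (simp add: zz)
    then have "i1 + i2 \<ge> 1" "j1 + j2 \<ge> 1" by (auto simp: wJ_def) (cases "i1 = 0"; cases "i2 = 0"; cases "j1 = 0"; cases "j2 = 0"; simp)+
    then have deg: "mdeg \<mu> + 2 = mdeg (i1,j1) + mdeg (i2,j2)"
      using z(2) by (auto simp: zz eJ_def mdeg_def)
    obtain i j where mu: "\<mu> = (i,j)" by (cases \<mu>)
    from L have "p (Suc i, j) \<noteq> 0 \<or> p (i, Suc j) \<noteq> 0 \<or> q (Suc i, j) \<noteq> 0 \<or> q (i, Suc j) \<noteq> 0"
      by (auto simp: LP_coeff mu dx2_def dy2_def)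
    then obtain m where m: "m \<in> supp2 p \<union> supp2 q" "mdeg m = mdeg \<mu> + 1"
    proof (elim disjE)
      assume "p (Suc i, j) \<noteq> 0" then show thesis using that[of "(Suc i, j)"] by (simp add: supp2_def mdeg_def mu)
    next
      assume "p (i, Suc j) \<noteq> 0" then show thesis using that[of "(i, Suc j)"] by (simp add: supp2_def mdeg_def mu)
    next
      assume "q (Suc i, j) \<noteq> 0" then show thesis using that[of "(Suc i, j)"] by (simp add: supp2_def mdeg_def mu)
    next
      assume "q (i, Suc j) \<noteq> 0" then show thesis using that[of "(i, Suc j)"] by (simp add: supp2_def mdeg_def mu)
    qed
    have "mdeg m + 1 \<noteq> mdeg (i1,j1) + mdeg (i2,j2)" using assms(1) z(1) m(1) unfolding Sep_def zz by auto
    then show False using m(2) deg by simp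
  qed
  then show "LP a b c d p q \<mu> = 0" "JP p q \<mu> = 0" using assms(2)[of \<mu>] by auto
qed



lemma deg_ge: "poly2 p \<Longrightarrow> m \<in> supp2 p \<Longrightarrow> mdeg m \<le> deg2 p"
  by (auto simp: deg2_def poly2_def)

lemma ord_eq: "poly2 p \<Longrightarrow> supp2 p \<noteq> {} \<Longrightarrow> ord2 p = enat (Min (mdeg ` supp2 p))"
  by (simp add: ord2_def)

lemma min_le: "poly2 p \<Longrightarrow> m \<in> supp2 p \<Longrightarrow> Min (mdeg ` supp2 p) \<le> mdeg m"
  by (simp add: poly2_def)

lemma gap_q:
  assumes "gap_condition p q" "m1 \<in> supp2 p" "m2 \<in> supp2 q" "m \<in> supp2 q" "mdeg m1 \<ge> 2"
  shows "mdeg m + 1 \<noteq> mdeg m1 + mdeg m2"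
proof
  assume eq: "mdeg m + 1 = mdeg m1 + mdeg m2"
  then have ne: "m \<noteq> m2" using assms(5) by auto
  have "\<bar>int (mdeg m) - int (mdeg m2)\<bar> = int (mdeg m1) - 1" using eq assms(5) by simp
  then have "\<exists>a b. int (mdeg m1) - 1 = \<bar>int (mdeg a) - int (mdeg b)\<bar> \<and> a \<in> supp2 q \<and> b \<in> supp2 q \<and> a \<noteq> b"
    using assms(3,4) ne by (intro exI[of _ m] exI[of _ m2]) auto
  then have "int (mdeg m1) - 1 \<in> gaps q" unfolding gaps_def by blast
  then show False using assms(1,2) by (auto simp: gap_condition_def)
qed

lemma sep_cases:
  assumes "poly2 p" "poly2 q" "ord2 p > 1" "ord2 q > 1"
    and "enat (max (deg2 p) (deg2 q)) < ord2 p + ord2 q - 1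
         \<or> (even2 p \<and> even2 q)
         \<or> (odd2 p \<and> even2 q \<and> gap_condition p q)
         \<or> sym_gap_condition p q"
  shows "Sep p q"
  unfolding Sep_def
proof (intro ballI)
  fix m1 m2 m assume m1: "m1 \<in> supp2 p" and m2: "m2 \<in> supp2 q" and m: "m \<in> supp2 p \<union> supp2 q"
  have d1: "mdeg m1 \<ge> 2" using ord_gt1[OF assms(1,3) m1] .
  have d2: "mdeg m2 \<ge> 2" using ord_gt1[OF assms(2,4) m2] .
  from assms(5) show "mdeg m + 1 \<noteq> mdeg m1 + mdeg m2"
  proof (elim disjE conjE)
    assume h: "enat (max (deg2 p) (deg2 q)) < ord2 p + ord2 q - 1"
    have op: "ord2 p = enat (Min (mdeg ` supp2 p))" using ord_eq[OF assms(1)] m1 by blast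
    have oq: "ord2 q = enat (Min (mdeg ` supp2 q))" using ord_eq[OF assms(2)] m2 by blast
    have "max (deg2 p) (deg2 q) < Min (mdeg ` supp2 p) + Min (mdeg ` supp2 q) - 1"
      using h unfolding op oq by (simp add: one_enat_def)
    moreover have "mdeg m \<le> max (deg2 p) (deg2 q)" using m deg_ge[OF assms(1), of m] deg_ge[OF assms(2), of m]
      by (metis Un_iff le_max_iff_disj)
    moreover have "Min (mdeg ` supp2 p) \<le> mdeg m1" "Min (mdeg ` supp2 q) \<le> mdeg m2"
      using min_le[OF assms(1) m1] min_le[OF assms(2) m2] .
    ultimately show ?thesis by linarith
  next
    assume "even2 p" "even2 q"
    then have "even (mdeg m)" "even (mdeg m1)" "even (mdeg m2)" using m m1 m2 by (auto simp: even2_def)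
    then show ?thesis by presburger
  next
    assume o: "odd2 p" "even2 q" "gap_condition p q"
    show ?thesis
    proof (cases "m \<in> supp2 p")
      case True
      then have "odd (mdeg m)" "odd (mdeg m1)" "even (mdeg m2)" using m1 m2 o by (auto simp: even2_def odd2_def)
      then show ?thesis by presburger
    next
      case False
      then have "m \<in> supp2 q" using m by auto
      then show ?thesis using gap_q[OF o(3) m1 m2 _ d1] by blast
    qed
  next
    assume s: "sym_gap_condition p q"
    show ?thesis
    proof (cases "m \<in> supp2 q")
      case True
      then show ?thesis using gap_q[OF _ m1 m2 True d1] s by (auto simp: sym_gap_condition_def)
    next
      case False
      then have "m \<in> supp2 p" using m by auto
      then have "mdeg m + 1 \<noteq> mdeg m2 + mdeg m1" using gap_q[OF _ m2 m1 _ d2] s by (auto simp: sym_gap_condition_def)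
      then show ?thesis by simp
    qed
  qed
qed



lemma eval_zero_fun: "(\<And>m. P m = 0) \<Longrightarrow> eval2 P x y = 0"
  by (simp add: eval2_def supp2_def)

definition Kof :: "real \<Rightarrow> real \<Rightarrow> real \<Rightarrow> real \<Rightarrow> poly2 \<Rightarrow> poly2 \<Rightarrow> poly2" where
  "Kof a b c d p q = (\<lambda>(i,j). if j \<ge> 1 then lin2 d p (-b) q (i, j - 1) / real j
      else if i \<ge> 1 then lin2 c p (-a) q (i - 1, 0) / real i else 0)"

lemma Kof_dy: "dy2 (Kof a b c d p q) = lin2 d p (-b) q"
  by (auto simp: fun_eq_iff dy2_def Kof_def)

lemma Kof_dx:
  assumes "\<And>\<mu>. LP a b c d p q \<mu> = 0"
  shows "dx2 (Kof a b c d p q) = lin2 c p (-a) q"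
proof -
  have "dx2 (Kof a b c d p q) (i,j) = lin2 c p (-a) q (i,j)" for i j
  proof (cases j)
    case 0 then show ?thesis by (simp add: dx2_def Kof_def)
  next
    case (Suc j')
    have "LP a b c d p q (i, j') = 0" using assms by simp
    then have e: "real (Suc i) * (d * p (Suc i, j') - b * q (Suc i, j')) = real (Suc j') * (c * p (i, Suc j') - a * q (i, Suc j'))"
      unfolding LP_coeff dx2_def dy2_def by (simp add: algebra_simps)
    have "dx2 (Kof a b c d p q) (i,j) = real (Suc i) * (d * p (Suc i, j') - b * q (Suc i, j')) / real (Suc j')"
      by (simp add: dx2_def Kof_def Suc lin2_def)
    also have "\<dots> = c * p (i, Suc j') - a * q (i, Suc j')" unfolding e by simp
    finally show ?thesis by (simp add: Suc lin2_def)
  qed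
  then show ?thesis by auto
qed

lemma poly2_Kof:
  assumes "poly2 p" "poly2 q"
  shows "poly2 (Kof a b c d p q)"
proof -
  have f1: "finite ((\<lambda>(i,j). (i, Suc j)) ` supp2 (lin2 d p (-b) q))"
    using poly2_lin2[OF assms] by (simp add: poly2_def)
  have f2: "finite ((\<lambda>(i,j). (Suc i, j)) ` supp2 (lin2 c p (-a) q))"
    using poly2_lin2[OF assms] by (simp add: poly2_def)
  have "supp2 (Kof a b c d p q) \<subseteq> (\<lambda>(i,j). (i, Suc j)) ` supp2 (lin2 d p (-b) q) \<union> (\<lambda>(i,j). (Suc i, j)) ` supp2 (lin2 c p (-a) q)"
  proof
    fix m assume m: "m \<in> supp2 (Kof a b c d p q)"
    obtain i j where mm: "m = (i,j)" by (cases m)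
    show "m \<in> (\<lambda>(i,j). (i, Suc j)) ` supp2 (lin2 d p (-b) q) \<union> (\<lambda>(i,j). (Suc i, j)) ` supp2 (lin2 c p (-a) q)"
    proof (cases j)
      case 0
      then have "i \<ge> 1" "lin2 c p (-a) q (i - 1, 0) \<noteq> 0" using m by (auto simp: supp2_def Kof_def mm split: if_splits)
      then have "(i - 1, 0) \<in> supp2 (lin2 c p (-a) q)" "m = (\<lambda>(i,j). (Suc i, j)) (i - 1, 0)"
        by (auto simp: supp2_def mm 0)
      then show ?thesis by blast
    next
      case (Suc j')
      then have "lin2 d p (-b) q (i, j') \<noteq> 0" using m by (auto simp: supp2_def Kof_def mm)
      then have "(i, j') \<in> supp2 (lin2 d p (-b) q)" "m = (\<lambda>(i,j). (i, Suc j)) (i, j')"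
        by (auto simp: supp2_def mm Suc)
      then show ?thesis by blast
    qed
  qed
  then show ?thesis unfolding poly2_def using f1 f2 by (meson finite_Un finite_subset)
qed

lemma dxdy_comm: "dy2 (dx2 K) = dx2 (dy2 K)"
  by (auto simp: fun_eq_iff dx2_def dy2_def)

lemma Kof_hess:
  assumes "poly2 p" "poly2 q" "\<And>\<mu>. LP a b c d p q \<mu> = 0" "\<And>\<mu>. JP p q \<mu> = 0"
  shows "HessP (Kof a b c d p q) \<mu> = 0"
proof -
  define K where "K = Kof a b c d p q"
  have pK: "poly2 K" unfolding K_def by (rule poly2_Kof[OF assms(1,2)])
  have "eval2 (HessP K) x y = 0" for x y
  proof -
    define px where "px = eval2 (dx2 p) x y"
    define py where "py = eval2 (dy2 p) x y"
    define qx where "qx = eval2 (dx2 q) x y"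
    define qy where "qy = eval2 (dy2 q) x y"
    have L: "d * px - c * py - b * qx + a * qy = 0"
      using eval_zero_fun[of "LP a b c d p q", OF assms(3)] eval_LP[OF assms(1,2)]
      unfolding px_def py_def qx_def qy_def by metis
    have J: "px * qy - py * qx = 0"
      using eval_zero_fun[of "JP p q", OF assms(4)] eval_JP[OF assms(1,2)]
      unfolding px_def py_def qx_def qy_def by metis
    have xx: "eval2 (dx2 (dx2 K)) x y = c * px - a * qx"
      unfolding K_def Kof_dx[OF assms(3)] dx2_lin2 px_def qx_def
      by (simp add: eval_lin2 poly2_dx2 assms)
    have yy: "eval2 (dy2 (dy2 K)) x y = d * py - b * qy"
      unfolding K_def Kof_dy dy2_lin2 py_def qy_def
      by (simp add: eval_lin2 poly2_dy2 assms)
    have xy: "eval2 (dx2 (dy2 K)) x y = d * px - b * qx"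
      unfolding K_def Kof_dy dx2_lin2 px_def qx_def
      by (simp add: eval_lin2 poly2_dx2 assms)
    have "eval2 (HessP K) x y = (c * px - a * qx) * (d * py - b * qy) - (d * px - b * qx) * (d * px - b * qx)"
      unfolding eval_HessP[OF pK] xx yy xy ..
    also have "\<dots> = (a * d - b * c) * (px * qy - py * qx) - (d * px - b * qx) * (d * px - c * py - b * qx + a * qy)"
      by (simp add: algebra_simps)
    also have "\<dots> = 0" using L J by simp
    finally show ?thesis .
  qed
  then show ?thesis using poly2_zero[OF poly2_HessP[OF pK]] K_def by blast
qed



lemma hess_coeff:
  assumes pK: "poly2 K" and HK: "\<And>\<mu>. HessP K \<mu> = 0" and "fst \<nu> \<ge> 2" "snd \<nu> \<ge> 2"
  shows "(\<Sum>z\<in>{z\<in>supp2 K \<times> supp2 K. fst (fst z) + fst (snd z) = fst \<nu> \<and> snd (fst z) + snd (snd z) = snd \<nu>}.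
           wH (fst z) (snd z) * K (fst z) * K (snd z)) = 0"
proof -
  define E where "E = {z\<in>supp2 K \<times> supp2 K. eH (fst z) (snd z) = (fst \<nu> - 2, snd \<nu> - 2)}"
  define T where "T = {z\<in>supp2 K \<times> supp2 K. fst (fst z) + fst (snd z) = fst \<nu> \<and> snd (fst z) + snd (snd z) = snd \<nu>}"
  have fE: "finite E" using pK by (simp add: E_def poly2_def)
  have TE: "T \<subseteq> E" by (auto simp: T_def E_def eH_def)
  have "(\<Sum>z\<in>T. wH (fst z) (snd z) * K (fst z) * K (snd z)) = (\<Sum>z\<in>E. wH (fst z) (snd z) * K (fst z) * K (snd z))"
  proof (rule sum.mono_neutral_left[OF fE TE], rule ballI)
    fix z assume z: "z \<in> E - T"
    obtain i1 j1 i2 j2 where zz: "z = ((i1,j1),(i2,j2))" by (metis prod.collapse)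
    from z have "i1 + i2 - 2 = fst \<nu> - 2" "j1 + j2 - 2 = snd \<nu> - 2" "\<not> (i1 + i2 = fst \<nu> \<and> j1 + j2 = snd \<nu>)"
      by (auto simp: E_def T_def eH_def zz)
    then have "i1 + i2 \<le> 1 \<or> j1 + j2 \<le> 1" using assms(3,4) by linarith
    then have "wH (i1,j1) (i2,j2) = 0"
    proof
      assume "i1 + i2 \<le> 1"
      then have "i1 = 0 \<or> (i1 = 1 \<and> i2 = 0)" by auto
      then show ?thesis unfolding wH_def by auto
    next
      assume "j1 + j2 \<le> 1"
      then have "j2 = 0 \<or> (j2 = 1 \<and> j1 = 0)" by auto
      then show ?thesis unfolding wH_def by auto
    qed
    then show "wH (fst z) (snd z) * K (fst z) * K (snd z) = 0" by (simp add: zz)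
  qed
  also have "\<dots> = HessP K (fst \<nu> - 2, snd \<nu> - 2)" by (simp add: HessP_def gconv_def E_def)
  also have "\<dots> = 0" by (rule HK)
  finally show ?thesis by (simp add: T_def)
qed

lemma wH_self_ne:
  assumes "i \<ge> 1" "r \<ge> 1"
  shows "wH (i, r) (i, r) \<noteq> 0"
proof -
  have "wH (i, r) (i, r) = real i * real r * (1 - real i - real r)"
    by (simp add: wH_def algebra_simps)
  moreover have "real i * real r > 0" using assms by simp
  moreover have "1 - real i - real r < 0" using assms by simp
  ultimately show ?thesis by (metis mult_pos_neg less_irrefl)
qed

lemma top_unique:
  assumes pK: "poly2 K" and HK: "\<And>\<mu>. HessP K \<mu> = 0" and r: "r \<ge> 1"
    and bound: "\<And>m. m \<in> supp2 K \<Longrightarrow> snd m \<le> r" and im: "(i, r) \<in> supp2 K"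
  shows "i = 0"
proof (rule ccontr)
  assume i0: "i \<noteq> 0"
  define I where "I = {i. (i, r) \<in> supp2 K}"
  have fI: "finite I" using pK unfolding I_def poly2_def
    by (rule finite_subset[rotated, OF finite_imageI[of _ fst]]) force
  define s where "s = Max I"
  have iI: "i \<in> I" using im by (simp add: I_def)
  have sI: "s \<in> I" using fI iI by (metis Max_in empty_iff s_def)
  have i_s: "i \<le> s" using fI iI by (simp add: s_def)
  have s1: "s \<ge> 1" using i_s i0 by simp
  define T where "T = {z\<in>supp2 K \<times> supp2 K. fst (fst z) + fst (snd z) = fst (2*s, 2*r) \<and> snd (fst z) + snd (snd z) = snd (2*s, 2*r)}"
  have T: "T = {((s,r),(s,r))}"
  proof
    show "{((s, r), s, r)} \<subseteq> T" using sI by (simp add: T_def I_def)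
    show "T \<subseteq> {((s, r), s, r)}"
    proof
      fix z assume z: "z \<in> T"
      obtain i1 j1 i2 j2 where zz: "z = ((i1,j1),(i2,j2))" by (metis prod.collapse)
      have m1: "(i1,j1) \<in> supp2 K" and m2: "(i2,j2) \<in> supp2 K" and e: "i1 + i2 = 2*s" "j1 + j2 = 2*r"
        using z by (auto simp: T_def zz)
      have "j1 \<le> r" "j2 \<le> r" using bound[OF m1] bound[OF m2] by auto
      then have j: "j1 = r" "j2 = r" using e by auto
      have "i1 \<in> I" "i2 \<in> I" using m1 m2 j by (auto simp: I_def)
      then have "i1 \<le> s" "i2 \<le> s" using fI by (auto simp: s_def)
      then have "i1 = s" "i2 = s" using e by auto
      then show "z \<in> {((s, r), s, r)}" using j zz by simp
    qed
  qed
  have "(\<Sum>z\<in>T. wH (fst z) (snd z) * K (fst z) * K (snd z)) = 0"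
    unfolding T_def by (rule hess_coeff[OF pK HK]) (use s1 r in auto)
  then have "wH (s,r) (s,r) * K (s,r) * K (s,r) = 0" by (simp add: T)
  moreover have "K (s,r) \<noteq> 0" using sI by (simp add: I_def supp2_def)
  ultimately show False using wH_self_ne[OF s1 r] by simp
qed



lemma slope_lemma:
  assumes pK: "poly2 K" and HK: "\<And>\<mu>. HessP K \<mu> = 0" and r: "r \<ge> 2"
    and bound: "\<And>m. m \<in> supp2 K \<Longrightarrow> snd m \<le> r" and top: "(0, r) \<in> supp2 K"
  shows "(\<forall>m\<in>supp2 K. fst m + snd m \<le> r) \<and>
         ((\<exists>m\<in>supp2 K. snd m < r \<and> fst m + snd m = r) \<longrightarrow> (1, r - 1) \<in> supp2 K)"
proof -
  define S where "S = supp2 K"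
  have fS: "finite S" using pK by (simp add: S_def poly2_def)
  have top1: "fst m = 0" if "m \<in> S" "snd m = r" for m
    using top_unique[OF pK HK _ bound, of "fst m"] that r by (cases m) (auto simp: S_def)
  show ?thesis
  proof (cases "\<exists>m\<in>S. snd m < r \<and> fst m + snd m \<ge> r")
    case False
    have "fst m + snd m \<le> r" if "m \<in> S" for m
    proof (cases "snd m = r")
      case True then show ?thesis using top1[OF that] by simp
    next
      case False
      then have "snd m < r" using bound that S_def le_neq_implies_less by blast
      then show ?thesis using \<open>\<not> (\<exists>m\<in>S. snd m < r \<and> fst m + snd m \<ge> r)\<close> that by auto
    qed
    then show ?thesis using False unfolding S_def[symmetric] by auto
  next
    case True
    then obtain m0 where m0: "m0 \<in> S" "snd m0 < r" "fst m0 + snd m0 \<ge> r" by blast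
    define S' where "S' = {m\<in>S. snd m < r}"
    have fS': "finite S'" using fS by (simp add: S'_def)
    have m0S': "m0 \<in> S'" using m0 by (simp add: S'_def)
    define slope where "slope = (\<lambda>m::nat\<times>nat. real (fst m) / real (r - snd m))"
    define \<sigma> where "\<sigma> = Max (slope ` S')"
    have sle: "slope m \<le> \<sigma>" if "m \<in> S'" for m using fS' that by (simp add: \<sigma>_def)
    have \<sigma>in: "\<sigma> \<in> slope ` S'" using fS' m0S' unfolding \<sigma>_def by (intro Max_in) auto
    define T1 where "T1 = {m\<in>S'. slope m = \<sigma>}"
    have fT1: "finite T1" using fS' by (simp add: T1_def)
    have T1ne: "T1 \<noteq> {}" using \<sigma>in by (auto simp: T1_def)
    define j' where "j' = Max (snd ` T1)"
    have j'in: "j' \<in> snd ` T1" using fT1 T1ne unfolding j'_def by (intro Max_in) auto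
    have jle: "snd m \<le> j'" if "m \<in> T1" for m using fT1 that by (simp add: j'_def)
    then obtain i' where m'T1: "(i', j') \<in> T1" using j'in by force
    have m'S: "(i', j') \<in> S" and j'r: "j' < r" and sl': "slope (i', j') = \<sigma>"
      using m'T1 by (auto simp: T1_def S'_def)
    have rpos: "real (r - snd m) > 0" if "m \<in> S'" for m using that by (auto simp: S'_def)
    have "slope m0 \<ge> 1" using m0 by (simp add: slope_def)
    then have \<sigma>1: "\<sigma> \<ge> 1" using sle[OF m0S'] by simp
    have i'eq: "real i' = \<sigma> * real (r - j')"
      using sl' j'r by (simp add: slope_def divide_eq_eq)
    have i'ge: "real i' \<ge> real (r - j')" using i'eq \<sigma>1 j'r by (simp add: mult_le_cancel_right1)
    have W: "real (fst m) * real (r - j') + real i' * real (snd m) \<le> real i' * real r" if "m \<in> S" for m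
    proof (cases "snd m = r")
      case True then show ?thesis using top1[OF that] by simp
    next
      case False
      then have mS': "m \<in> S'" using bound that by (auto simp: S'_def S_def le_neq_implies_less)
      have "real (fst m) / real (r - snd m) \<le> real i' / real (r - j')"
        using sle[OF mS'] sl' by (simp add: slope_def)
      then have "real (fst m) * real (r - j') \<le> real i' * real (r - snd m)"
        using rpos[OF mS'] j'r by (simp add: divide_le_eq le_divide_eq field_simps)
      moreover have "real (r - snd m) = real r - real (snd m)" using mS' by (simp add: S'_def)
      ultimately show ?thesis by (simp add: algebra_simps)
    qed
    have Weq: "slope m = \<sigma>" if "m \<in> S'" "real (fst m) * real (r - j') + real i' * real (snd m) = real i' * real r" for m
    proof -
      have "real (r - snd m) = real r - real (snd m)" using that by (simp add: S'_def)
      then have "real (fst m) * real (r - j') = real i' * real (r - snd m)" using that(2) by (simp add: algebra_simps)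
      then have "real (fst m) / real (r - snd m) = real i' / real (r - j')"
        using rpos[OF that(1)] j'r by (simp add: field_simps)
      then show ?thesis using sl' by (simp add: slope_def)
    qed
    have i'le1: "i' \<le> 1"
    proof (rule ccontr)
      assume "\<not> i' \<le> 1"
      then have i'2: "i' \<ge> 2" by simp
      define T where "T = {z\<in>S \<times> S. fst (fst z) + fst (snd z) = fst (i', r + j') \<and> snd (fst z) + snd (snd z) = snd (i', r + j')}"
      have topS: "(0, r) \<in> S" using top by (simp add: S_def)
      have Teq: "T = {((0,r),(i',j')), ((i',j'),(0,r))}"
      proof
        show "{((0,r),(i',j')), ((i',j'),(0,r))} \<subseteq> T" using topS m'S by (auto simp: T_def)
        show "T \<subseteq> {((0,r),(i',j')), ((i',j'),(0,r))}"
        proof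
          fix z assume z: "z \<in> T"
          obtain i1 j1 i2 j2 where zz: "z = ((i1,j1),(i2,j2))" by (metis prod.collapse)
          have m1: "(i1,j1) \<in> S" and m2: "(i2,j2) \<in> S" and e: "i1 + i2 = i'" "j1 + j2 = r + j'"
            using z by (auto simp: T_def zz)
          have W1: "real i1 * real (r - j') + real i' * real j1 \<le> real i' * real r" using W[OF m1] by simp
          have W2: "real i2 * real (r - j') + real i' * real j2 \<le> real i' * real r" using W[OF m2] by simp
          have sumW: "(real i1 * real (r - j') + real i' * real j1) + (real i2 * real (r - j') + real i' * real j2) = 2 * (real i' * real r)"
          proof -
            have "real i1 + real i2 = real i'" "real j1 + real j2 = real r + real j'" using e by linarith+
            moreover have "real (r - j') = real r - real j'" using j'r by simp
            ultimately have h: "real i1 + real i2 = real i'" "real j1 + real j2 = real r + real j'" "real (r - j') = real r - real j'" by auto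
            have "(real i1 * real (r - j') + real i' * real j1) + (real i2 * real (r - j') + real i' * real j2)
                = (real i1 + real i2) * real (r - j') + real i' * (real j1 + real j2)" by (simp add: algebra_simps)
            also have "\<dots> = real i' * (real r - real j') + real i' * (real r + real j')" using h by simp
            also have "\<dots> = 2 * (real i' * real r)" by (simp add: algebra_simps)
            finally show ?thesis .
          qed
          have E1: "real i1 * real (r - j') + real i' * real j1 = real i' * real r" using W1 W2 sumW by linarith
          have E2: "real i2 * real (r - j') + real i' * real j2 = real i' * real r" using W1 W2 sumW by linarith
          show "z \<in> {((0,r),(i',j')), ((i',j'),(0,r))}"
          proof (cases "j1 = r")
            case True
            then have "i1 = 0" using top1[OF m1] by simp
            then show ?thesis using e True zz by auto
          next
            case j1r: False
            show ?thesis
            proof (cases "j2 = r")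
              case True
              then have "i2 = 0" using top1[OF m2] by simp
              then show ?thesis using e True zz by auto
            next
              case False
              have s1: "(i1,j1) \<in> S'" using m1 j1r bound by (auto simp: S'_def S_def le_neq_implies_less)
              have s2: "(i2,j2) \<in> S'" using m2 False bound by (auto simp: S'_def S_def le_neq_implies_less)
              have "(i1,j1) \<in> T1" using Weq[OF s1] E1 s1 by (simp add: T1_def)
              moreover have "(i2,j2) \<in> T1" using Weq[OF s2] E2 s2 by (simp add: T1_def)
              ultimately have "j1 \<le> j'" "j2 \<le> j'" using jle by fastforce+
              then show ?thesis using e j'r by linarith
            qed
          qed
        qed
      qed
      have A: "(\<Sum>z\<in>T. wH (fst z) (snd z) * K (fst z) * K (snd z)) = 0"
        unfolding T_def S_def by (rule hess_coeff[OF pK HK]) (use i'2 r in auto)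
      have B: "(\<Sum>z\<in>T. wH (fst z) (snd z) * K (fst z) * K (snd z))
          = wH (0,r) (i',j') * K (0,r) * K (i',j') + wH (i',j') (0,r) * K (i',j') * K (0,r)"
      proof -
        have "((0::nat,r),(i',j')) \<noteq> ((i',j'),(0,r))" using j'r by auto
        then show ?thesis unfolding Teq by simp
      qed
      have C: "wH (0,r) (i',j') = 0" by (simp add: wH_def)
      have D: "wH (i',j') (0,r) = real i' * (real i' - 1) * real r * (real r - 1)" by (simp add: wH_def)
      have P: "real i' * (real i' - 1) * real r * (real r - 1) \<noteq> 0" using i'2 r by simp
      have KK: "K (0,r) \<noteq> 0" "K (i',j') \<noteq> 0" using topS m'S by (auto simp: S_def supp2_def)
      have "real i' * (real i' - 1) * real r * (real r - 1) * K (i',j') * K (0,r) = 0"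
        using A B C D by simp
      then show False using P KK by simp
    qed
    have i'1: "i' = 1" and j'1: "j' = r - 1"
    proof -
      have "real (r - j') \<ge> 1" using j'r by simp
      then have "real i' \<ge> 1" using i'ge by linarith
      then show "i' = 1" using i'le1 by simp
      then show "j' = r - 1" using i'ge j'r by simp
    qed
    have \<sigma>eq: "\<sigma> = 1" using i'eq i'1 j'1 r by simp
    have "fst m + snd m \<le> r" if "m \<in> S" for m
    proof (cases "snd m = r")
      case True then show ?thesis using top1[OF that] by simp
    next
      case False
      then have mS': "m \<in> S'" using bound that by (auto simp: S'_def S_def le_neq_implies_less)
      have "real (fst m) / real (r - snd m) \<le> 1" using sle[OF mS'] \<sigma>eq by (simp add: slope_def)
      then have "real (fst m) \<le> real (r - snd m)" using rpos[OF mS'] by (simp add: divide_le_eq)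
      then have "fst m \<le> r - snd m" by linarith
      moreover have "snd m < r" using mS' by (simp add: S'_def)
      ultimately show ?thesis by linarith
    qed
    moreover have "(1, r - 1) \<in> S" using m'S i'1 j'1 by simp
    ultimately show ?thesis unfolding S_def by auto
  qed
qed



definition swapP :: "poly2 \<Rightarrow> poly2" where "swapP K = (\<lambda>m. K (snd m, fst m))"

lemma supp_swapP: "supp2 (swapP K) = prod.swap ` supp2 K"
  by (auto simp: supp2_def swapP_def image_iff)

lemma poly2_swapP: "poly2 K \<Longrightarrow> poly2 (swapP K)"
  by (simp add: poly2_def supp_swapP)

lemma eval_swapP: assumes "poly2 K" shows "eval2 (swapP K) x y = eval2 K y x"
proof -
  have "eval2 (swapP K) x y = (\<Sum>m\<in>prod.swap ` supp2 K. swapP K m * x ^ fst m * y ^ snd m)"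
    unfolding eval2_def supp_swapP ..
  also have "\<dots> = (\<Sum>m\<in>supp2 K. swapP K (prod.swap m) * x ^ fst (prod.swap m) * y ^ snd (prod.swap m))"
    by (rule sum.reindex[unfolded comp_def]) simp
  also have "\<dots> = eval2 K y x" by (simp add: eval2_def swapP_def mult_ac)
  finally show ?thesis .
qed

lemma dx2_swapP: "dx2 (swapP K) = swapP (dy2 K)"
  by (auto simp: fun_eq_iff dx2_def dy2_def swapP_def)
lemma dy2_swapP: "dy2 (swapP K) = swapP (dx2 K)"
  by (auto simp: fun_eq_iff dx2_def dy2_def swapP_def)

lemma hess_swapP:
  assumes pK: "poly2 K" and HK: "\<And>\<mu>. HessP K \<mu> = 0"
  shows "HessP (swapP K) \<mu> = 0"
proof -
  have "eval2 (HessP (swapP K)) x y = 0" for x y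
  proof -
    have "eval2 (HessP (swapP K)) x y = eval2 (HessP K) y x"
      unfolding eval_HessP[OF poly2_swapP[OF pK]] eval_HessP[OF pK]
      unfolding dx2_swapP dy2_swapP dxdy_comm
      by (simp add: eval_swapP poly2_dx2 poly2_dy2 pK)
    then show ?thesis using eval_zero_fun[of "HessP K", OF HK] by simp
  qed
  then show ?thesis using poly2_zero[OF poly2_HessP[OF poly2_swapP[OF pK]]] by blast
qed

definition shearP :: "real \<Rightarrow> poly2 \<Rightarrow> poly2" where
  "shearP l K = (\<lambda>(i,j). \<Sum>k\<le>i. K (i - k, j + k) * real ((j + k) choose k) * l ^ k)"

lemma eval_shearP:
  assumes pK: "poly2 K"
  shows "poly2 (shearP l K)" "eval2 (shearP l K) s t = eval2 K s (t + l * s)"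
proof -
  define S where "S = supp2 K"
  have fS: "finite S" using pK by (simp add: S_def poly2_def)
  define Sg where "Sg = Sigma S (\<lambda>m. {..snd m})"
  have fSg: "finite Sg" using fS by (simp add: Sg_def)
  define \<phi> where "\<phi> = (\<lambda>z::(nat\<times>nat)\<times>nat. (fst (fst z) + snd z, snd (fst z) - snd z))"
  define g where "g = (\<lambda>z::(nat\<times>nat)\<times>nat. K (fst z) * real (snd (fst z) choose snd z) * l ^ snd z * s ^ (fst (fst z) + snd z) * t ^ (snd (fst z) - snd z))"
  have sub: "supp2 (shearP l K) \<subseteq> \<phi> ` Sg"
  proof
    fix \<mu> assume "\<mu> \<in> supp2 (shearP l K)"
    then obtain i j where mu: "\<mu> = (i,j)" and ne: "(\<Sum>k\<le>i. K (i - k, j + k) * real ((j + k) choose k) * l ^ k) \<noteq> 0"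
      by (cases \<mu>) (auto simp: supp2_def shearP_def)
    then obtain k where k: "k \<le> i" "K (i - k, j + k) \<noteq> 0"
      by (metis (no_types, lifting) atMost_iff mult_eq_0_iff sum.neutral)
    have "((i - k, j + k), k) \<in> Sg" using k by (simp add: Sg_def S_def supp2_def)
    moreover have "\<phi> ((i - k, j + k), k) = \<mu>" using k by (simp add: \<phi>_def mu)
    ultimately show "\<mu> \<in> \<phi> ` Sg" by force
  qed
  show "poly2 (shearP l K)" unfolding poly2_def
    by (rule finite_subset[OF sub]) (use fSg in simp)
  have "eval2 K s (t + l * s) = (\<Sum>m\<in>S. K m * s ^ fst m * (l * s + t) ^ snd m)"
    by (simp add: eval2_def S_def add.commute)
  also have "\<dots> = (\<Sum>m\<in>S. \<Sum>k\<le>snd m. g (m, k))"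
    by (rule sum.cong[OF refl]) (simp add: binomial_ring g_def sum_distrib_left power_mult_distrib power_add mult_ac)
  also have "\<dots> = (\<Sum>z\<in>Sg. g z)" unfolding Sg_def by (subst sum.Sigma) (use fS in auto)
  also have "\<dots> = (\<Sum>\<mu>\<in>\<phi> ` Sg. \<Sum>z\<in>{z\<in>Sg. \<phi> z = \<mu>}. g z)" by (rule sum.image_gen[OF fSg])
  also have "\<dots> = (\<Sum>\<mu>\<in>\<phi> ` Sg. shearP l K \<mu> * s ^ fst \<mu> * t ^ snd \<mu>)"
  proof (rule sum.cong[OF refl])
    fix \<mu> assume "\<mu> \<in> \<phi> ` Sg"
    obtain i j where mu: "\<mu> = (i,j)" by (cases \<mu>)
    define Ks where "Ks = {k\<in>{..i}. (i - k, j + k) \<in> S}"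
    define h where "h = (\<lambda>k. ((i - k, j + k), k))"
    have inj: "inj_on h Ks" by (auto simp: inj_on_def h_def)
    have img: "{z\<in>Sg. \<phi> z = \<mu>} = h ` Ks"
    proof
      show "{z\<in>Sg. \<phi> z = \<mu>} \<subseteq> h ` Ks"
      proof
        fix z assume z: "z \<in> {z\<in>Sg. \<phi> z = \<mu>}"
        obtain a b k where zz: "z = ((a,b),k)" by (metis prod.collapse)
        from z have "(a,b) \<in> S" "k \<le> b" "a + k = i" "b - k = j" by (auto simp: Sg_def \<phi>_def zz mu)
        then have "k \<in> Ks" "z = h k" by (auto simp: Ks_def h_def zz)
        then show "z \<in> h ` Ks" by blast
      qed
      show "h ` Ks \<subseteq> {z\<in>Sg. \<phi> z = \<mu>}"
        by (auto simp: Ks_def h_def Sg_def \<phi>_def mu)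
    qed
    have "(\<Sum>z\<in>{z\<in>Sg. \<phi> z = \<mu>}. g z) = (\<Sum>k\<in>Ks. g (h k))"
      unfolding img by (rule sum.reindex[OF inj, unfolded comp_def])
    also have "\<dots> = (\<Sum>k\<in>Ks. K (i - k, j + k) * real ((j + k) choose k) * l ^ k) * s ^ i * t ^ j"
      by (simp add: sum_distrib_right g_def h_def Ks_def)
    also have "(\<Sum>k\<in>Ks. K (i - k, j + k) * real ((j + k) choose k) * l ^ k) = shearP l K \<mu>"
      unfolding shearP_def mu prod.case
      by (rule sum.mono_neutral_left) (auto simp: Ks_def S_def supp2_def)
    finally show "(\<Sum>z\<in>{z\<in>Sg. \<phi> z = \<mu>}. g z) = shearP l K \<mu> * s ^ fst \<mu> * t ^ snd \<mu>"
      by (simp add: mu)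
  qed
  also have "\<dots> = eval2 (shearP l K) s t"
    by (rule eval2_sup[symmetric, OF _ sub]) (use fSg in simp)
  finally show "eval2 (shearP l K) s t = eval2 K s (t + l * s)" ..
qed



lemma DERIV_shear_x:
  assumes pK: "poly2 K"
  shows "((\<lambda>s. eval2 K s (t + l * s)) has_real_derivative
          eval2 (dx2 K) s (t + l * s) + l * eval2 (dy2 K) s (t + l * s)) (at s)"
proof -
  have "((\<lambda>s. \<Sum>m\<in>supp2 K. K m * s ^ fst m * (t + l * s) ^ snd m) has_real_derivative
     (\<Sum>m\<in>supp2 K. K m * (real (fst m) * s ^ (fst m - 1)) * (t + l * s) ^ snd m
          + K m * s ^ fst m * (real (snd m) * (t + l * s) ^ (snd m - 1) * l))) (at s)"
    by (rule DERIV_sum) (rule derivative_eq_intros refl | simp)+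
  moreover have "(\<Sum>m\<in>supp2 K. K m * (real (fst m) * s ^ (fst m - 1)) * (t + l * s) ^ snd m
          + K m * s ^ fst m * (real (snd m) * (t + l * s) ^ (snd m - 1) * l))
      = eval2 (dx2 K) s (t + l * s) + l * eval2 (dy2 K) s (t + l * s)"
    unfolding eval_dx[OF pK] eval_dy[OF pK]
    by (simp add: sum.distrib sum_distrib_left mult_ac)
  ultimately show ?thesis by (simp add: eval2_def)
qed

lemma shear_deriv:
  assumes pK: "poly2 K" and pK': "poly2 K'" and eq: "\<And>s t. eval2 K' s t = eval2 K s (t + l * s)"
  shows "eval2 (dy2 K') s t = eval2 (dy2 K) s (t + l * s)"
    and "eval2 (dx2 K') s t = eval2 (lin2 1 (dx2 K) l (dy2 K)) s (t + l * s)"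
proof -
  have f1: "(\<lambda>t. eval2 K' s t) = (\<lambda>t. eval2 K s (t + l * s))" using eq by auto
  have "((\<lambda>t. eval2 K s (t + l * s)) has_real_derivative eval2 (dy2 K) s (t + l * s) * 1) (at t)"
    by (rule DERIV_chain2[OF DERIV_eval_y[OF pK]]) (rule derivative_eq_intros refl | simp)+
  then show "eval2 (dy2 K') s t = eval2 (dy2 K) s (t + l * s)"
    using DERIV_eval_y[OF pK', of s t] f1 DERIV_unique by fastforce
  have f2: "(\<lambda>s. eval2 K' s t) = (\<lambda>s. eval2 K s (t + l * s))" using eq by auto
  have "eval2 (dx2 K') s t = eval2 (dx2 K) s (t + l * s) + l * eval2 (dy2 K) s (t + l * s)"
    using DERIV_eval_x[OF pK', of t s] DERIV_shear_x[OF pK, of t l s] f2 DERIV_unique by fastforce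
  then show "eval2 (dx2 K') s t = eval2 (lin2 1 (dx2 K) l (dy2 K)) s (t + l * s)"
    by (simp add: eval_lin2 poly2_dx2 poly2_dy2 pK)
qed

lemma shear_hess:
  assumes pK: "poly2 K" and HK: "\<And>\<mu>. HessP K \<mu> = 0"
  shows "HessP (shearP l K) \<mu> = 0"
proof -
  define K' where "K' = shearP l K"
  have pK': "poly2 K'" and eq: "\<And>s t. eval2 K' s t = eval2 K s (t + l * s)"
    using eval_shearP[OF pK] by (auto simp: K'_def)
  define R where "R = lin2 1 (dx2 K) l (dy2 K)"
  have pR: "poly2 R" unfolding R_def by (intro poly2_lin2 poly2_dx2 poly2_dy2 pK)
  have eqx: "eval2 (dx2 K') s t = eval2 R s (t + l * s)" for s t
    using shear_deriv(2)[OF pK pK' eq] by (simp add: R_def)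
  have eqy: "eval2 (dy2 K') s t = eval2 (dy2 K) s (t + l * s)" for s t
    using shear_deriv(1)[OF pK pK' eq] .
  have "eval2 (HessP K') s t = 0" for s t
  proof -
    define u where "u = t + l * s"
    define X where "X = eval2 (dx2 (dx2 K)) s u"
    define Y where "Y = eval2 (dy2 (dy2 K)) s u"
    define Z where "Z = eval2 (dx2 (dy2 K)) s u"
    have xx: "eval2 (dx2 (dx2 K')) s t = (X + l * Z) + l * (Z + l * Y)"
      using shear_deriv(2)[OF pR poly2_dx2[OF pK'] eqx, of s t]
      unfolding R_def dx2_lin2 dy2_lin2 u_def[symmetric] X_def Y_def Z_def
      by (simp add: eval_lin2 poly2_lin2 poly2_dx2 poly2_dy2 pK dxdy_comm)
    have yy: "eval2 (dy2 (dy2 K')) s t = Y"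
      using shear_deriv(1)[OF poly2_dy2[OF pK] poly2_dy2[OF pK'] eqy, of s t]
      unfolding u_def[symmetric] Y_def by simp
    have xy: "eval2 (dx2 (dy2 K')) s t = Z + l * Y"
      using shear_deriv(2)[OF poly2_dy2[OF pK] poly2_dy2[OF pK'] eqy, of s t]
      unfolding u_def[symmetric] Y_def Z_def
      by (simp add: eval_lin2 poly2_dx2 poly2_dy2 pK dxdy_comm)
    have "eval2 (HessP K') s t = X * Y - Z * Z"
      unfolding eval_HessP[OF pK'] xx yy xy by (simp add: algebra_simps)
    also have "\<dots> = eval2 (HessP K) s u" unfolding eval_HessP[OF pK] X_def Y_def Z_def ..
    also have "\<dots> = 0" using eval_zero_fun[of "HessP K", OF HK] by simp
    finally show ?thesis .
  qed
  then show ?thesis using poly2_zero[OF poly2_HessP[OF pK']] K'_def by blast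
qed



lemma low_form:
  assumes pK: "poly2 K" and b1: "\<And>m. m \<in> supp2 K \<Longrightarrow> snd m \<le> 1"
    and t1: "\<And>i. (i, 1) \<in> supp2 K \<Longrightarrow> i = 0"
  obtains n where "\<And>x y. eval2 K x y = (\<Sum>i\<le>n. K (i, 0) * x ^ i) + K (0, 1) * y"
proof -
  obtain n where n: "supp2 K \<subseteq> {..n} \<times> {..n}" using poly2_box[OF pK] by blast
  define F where "F = ({..n} \<times> {0}) \<union> {(0::nat, 1::nat)}"
  have sub: "supp2 K \<subseteq> F"
  proof
    fix m assume m: "m \<in> supp2 K"
    obtain i j where mm: "m = (i,j)" by (cases m)
    show "m \<in> F"
    proof (cases "j = 1")
      case True then show ?thesis using t1[of i] m by (simp add: F_def mm)
    next
      case False then have "j = 0" using b1[OF m] by (simp add: mm)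
      then show ?thesis using m n by (auto simp: F_def mm)
    qed
  qed
  have "eval2 K x y = (\<Sum>i\<le>n. K (i, 0) * x ^ i) + K (0, 1) * y" for x y
  proof -
    have "eval2 K x y = (\<Sum>m\<in>F. K m * x ^ fst m * y ^ snd m)"
      by (rule eval2_sup[OF _ sub]) (simp add: F_def)
    also have "\<dots> = (\<Sum>m\<in>{..n} \<times> {0}. K m * x ^ fst m * y ^ snd m) + K (0, 1) * y"
      unfolding F_def by (subst sum.union_disjoint) auto
    also have "(\<Sum>m\<in>{..n} \<times> {0}. K m * x ^ fst m * y ^ snd m) = (\<Sum>i\<le>n. K (i, 0) * x ^ i)"
    proof -
      have "{..n} \<times> {0} = (\<lambda>i. (i, 0::nat)) ` {..n}" by auto
      moreover have "inj_on (\<lambda>i. (i, 0::nat)) {..n}" by (auto simp: inj_on_def)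
      ultimately show ?thesis by (simp add: sum.reindex)
    qed
    finally show ?thesis .
  qed
  then show ?thesis using that by blast
qed

lemma shear_coeffs:
  assumes deg: "\<And>m. m \<in> supp2 K \<Longrightarrow> fst m + snd m \<le> r" and r: "r \<ge> 1"
  shows "\<And>i j. i + j > r \<Longrightarrow> shearP l K (i, j) = 0"
    and "shearP l K (0, r) = K (0, r)"
    and "shearP l K (1, r - 1) = K (1, r - 1) + K (0, r) * real r * l"
proof -
  fix i j assume ij: "i + j > r"
  have "K (i - k, j + k) = 0" if "k \<le> i" for k
  proof -
    have "(i - k) + (j + k) > r" using ij that by simp
    then show ?thesis using deg[of "(i - k, j + k)"] by (auto simp: supp2_def)
  qed
  then show "shearP l K (i, j) = 0" by (simp add: shearP_def)
next
  show "shearP l K (0, r) = K (0, r)" by (simp add: shearP_def)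
next
  have "r - 1 + 1 = r" using r by simp
  then show "shearP l K (1, r - 1) = K (1, r - 1) + K (0, r) * real r * l"
    by (simp add: shearP_def)
qed

theorem hess_zero_form:
  assumes pK: "poly2 K" and HK: "\<And>\<mu>. HessP K \<mu> = 0"
  shows "\<exists>\<alpha> \<beta> A N e1 e2. (\<alpha>, \<beta>) \<noteq> (0, 0) \<and>
     (\<forall>x y. eval2 K x y = (\<Sum>k\<le>N. A k * (\<alpha> * x + \<beta> * y) ^ k) + e1 * x + e2 * y)"
proof (cases "supp2 K = {}")
  case True
  then have "eval2 K x y = 0" for x y by (simp add: eval2_def)
  then show ?thesis by (intro exI[of _ 1] exI[of _ 0] exI[of _ "\<lambda>_. 0"]) auto
next
  case ne: False
  define S where "S = supp2 K"
  have fS: "finite S" using pK by (simp add: S_def poly2_def)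
  define r where "r = Max (snd ` S)"
  have bound: "\<And>m. m \<in> supp2 K \<Longrightarrow> snd m \<le> r" using fS by (auto simp: r_def S_def)
  have "r \<in> snd ` S" using fS ne unfolding r_def S_def by (intro Max_in) auto
  then obtain i0 where i0: "(i0, r) \<in> supp2 K" by (force simp: S_def)
  show ?thesis
  proof (cases "r \<le> 1")
    case True
    have b1: "\<And>m. m \<in> supp2 K \<Longrightarrow> snd m \<le> 1" using bound True by (meson order_trans)
    have t1: "i = 0" if "(i, 1) \<in> supp2 K" for i
    proof -
      have "r = 1" using bound[OF that] True by simp
      then show ?thesis using top_unique[OF pK HK _ bound] that by auto
    qed
    obtain n where n: "\<And>x y. eval2 K x y = (\<Sum>i\<le>n. K (i, 0) * x ^ i) + K (0, 1) * y"
      using low_form[OF pK b1 t1] by blast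
    show ?thesis
      by (intro exI[of _ 1] exI[of _ 0] exI[of _ "\<lambda>i. K (i, 0)"] exI[of _ n] exI[of _ 0] exI[of _ "K (0,1)"])
         (simp add: n)
  next
    case False
    then have r2: "r \<ge> 2" by simp
    have "i0 = 0" using top_unique[OF pK HK _ bound i0] r2 by simp
    then have top: "(0, r) \<in> supp2 K" using i0 by simp
    have degK: "\<And>m. m \<in> supp2 K \<Longrightarrow> fst m + snd m \<le> r"
      using slope_lemma[OF pK HK r2 bound top] by blast
    define e where "e = K (0, r)"
    have e0: "e \<noteq> 0" using top by (simp add: e_def supp2_def)
    define l where "l = - K (1, r - 1) / (real r * e)"
    define K' where "K' = shearP l K"
    have pK': "poly2 K'" and eq: "\<And>s t. eval2 K' s t = eval2 K s (t + l * s)"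
      using eval_shearP[OF pK] by (auto simp: K'_def)
    have HK': "\<And>\<mu>. HessP K' \<mu> = 0" unfolding K'_def by (rule shear_hess[OF pK HK])
    have c1: "K' (i, j) = 0" if "i + j > r" for i j
      using shear_coeffs(1)[OF degK _ that] r2 by (simp add: K'_def)
    have c2: "K' (0, r) = e" using shear_coeffs(2)[OF degK] r2 by (simp add: K'_def e_def)
    have c3: "K' (1, r - 1) = 0"
    proof -
      have "K' (1, r - 1) = K (1, r - 1) + e * real r * l"
        using shear_coeffs(3)[OF degK] r2 by (simp add: K'_def e_def)
      also have "\<dots> = 0" using e0 r2 by (simp add: l_def field_simps)
      finally show ?thesis .
    qed
    have degK': "\<And>m. m \<in> supp2 K' \<Longrightarrow> fst m + snd m \<le> r"
      using c1 by (fastforce simp: supp2_def not_less[symmetric])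
    have boundK': "\<And>m. m \<in> supp2 K' \<Longrightarrow> snd m \<le> r" using degK' by fastforce
    have topK': "(0, r) \<in> supp2 K'" using c2 e0 by (simp add: supp2_def)
    have noedge: "\<not> (\<exists>m\<in>supp2 K'. snd m < r \<and> fst m + snd m = r)"
      using slope_lemma[OF pK' HK' r2 boundK' topK'] c3 by (auto simp: supp2_def)
    define K2 where "K2 = swapP K'"
    have pK2: "poly2 K2" unfolding K2_def by (rule poly2_swapP[OF pK'])
    have HK2: "\<And>\<mu>. HessP K2 \<mu> = 0" unfolding K2_def by (rule hess_swapP[OF pK' HK'])
    have sK2: "m \<in> supp2 K2 \<longleftrightarrow> (snd m, fst m) \<in> supp2 K'" for m
      by (cases m) (auto simp: K2_def supp_swapP)
    have fK': "finite (supp2 K')" using pK' by (simp add: poly2_def)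
    define \<rho> where "\<rho> = Max (fst ` supp2 K')"
    have bound2: "\<And>m. m \<in> supp2 K2 \<Longrightarrow> snd m \<le> \<rho>"
      using fK' sK2 unfolding \<rho>_def by (metis Max_ge finite_imageI fst_conv image_eqI)
    have "\<rho> \<in> fst ` supp2 K'" using fK' topK' unfolding \<rho>_def by (intro Max_in) auto
    then obtain j0 where j0: "(\<rho>, j0) \<in> supp2 K'" by force
    have \<rho>1: "\<rho> \<le> 1"
    proof (rule ccontr)
      assume "\<not> \<rho> \<le> 1"
      then have \<rho>2: "\<rho> \<ge> 2" by simp
      have "(j0, \<rho>) \<in> supp2 K2" using j0 sK2 by simp
      then have "j0 = 0" using top_unique[OF pK2 HK2 _ bound2] \<rho>2 by simp
      then have top2: "(0, \<rho>) \<in> supp2 K2" and rho0: "(\<rho>, 0) \<in> supp2 K'" using j0 sK2 by auto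
      have deg2: "\<forall>m\<in>supp2 K2. fst m + snd m \<le> \<rho>"
        using slope_lemma[OF pK2 HK2 \<rho>2 bound2 top2] by blast
      have "r \<le> \<rho>" using deg2 topK' sK2[of "(r, 0)"] by auto
      moreover have "\<rho> \<le> r" using degK'[OF rho0] by simp
      ultimately have "\<rho> = r" by simp
      then show False using noedge rho0 r2 by force
    qed
    have b1: "\<And>m. m \<in> supp2 K2 \<Longrightarrow> snd m \<le> 1" using bound2 \<rho>1 by (meson order_trans)
    have t1: "i = 0" if "(i, 1) \<in> supp2 K2" for i
      using top_unique[OF pK2 HK2 _ b1 that] by simp
    obtain n where n: "\<And>x y. eval2 K2 x y = (\<Sum>i\<le>n. K2 (i, 0) * x ^ i) + K2 (0, 1) * y"
      using low_form[OF pK2 b1 t1] by blast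
    have "eval2 K x y = (\<Sum>i\<le>n. K' (0, i) * ((- l) * x + 1 * y) ^ i) + K' (1, 0) * x + 0 * y" for x y
    proof -
      have "eval2 K x y = eval2 K' x (y - l * x)" using eq[of x "y - l * x"] by simp
      also have "\<dots> = eval2 K2 (y - l * x) x" unfolding K2_def by (rule eval_swapP[OF pK', symmetric])
      also have "\<dots> = (\<Sum>i\<le>n. K' (0, i) * ((- l) * x + 1 * y) ^ i) + K' (1, 0) * x"
        unfolding n by (simp add: K2_def swapP_def)
      finally show ?thesis by simp
    qed
    then show ?thesis
      by (intro exI[of _ "-l"] exI[of _ "1::real"] exI[of _ "\<lambda>i. K' (0, i)"] exI[of _ n] exI[of _ "K' (1,0)"] exI[of _ "0::real"]) auto
  qed
qed



lemma jac0_eq: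
  assumes "poly2 p" "poly2 q" "ord2 p > 1" "ord2 q > 1"
  shows "jac0 a b c d p q = (\<lambda>(x,y). (a*x + b*y, c*x + d*y))"
proof -
  have dp: "eval2 (dx2 p) 0 0 = 0" "eval2 (dy2 p) 0 0 = 0"
    using eval_d0[OF assms(1)] ord_gt1[OF assms(1,3)] by auto
  have dq: "eval2 (dx2 q) 0 0 = 0" "eval2 (dy2 q) 0 0 = 0"
    using eval_d0[OF assms(2)] ord_gt1[OF assms(2,4)] by auto
  show ?thesis unfolding jac0_def dp dq by simp
qed

lemma lin_inv_aux:
  fixes a b c d u v D :: real
  assumes "D = a * d - b * c" "D \<noteq> 0"
  shows "a*((d*u - b*v)/D) + b*((a*v - c*u)/D) = u" "c*((d*u - b*v)/D) + d*((a*v - c*u)/D) = v"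
proof -
  have "a*((d*u - b*v)/D) + b*((a*v - c*u)/D) = ((a*d - b*c)*u)/D" using assms(2) by (simp add: field_simps)
  then show "a*((d*u - b*v)/D) + b*((a*v - c*u)/D) = u" using assms by simp
  have "c*((d*u - b*v)/D) + d*((a*v - c*u)/D) = ((a*d - b*c)*v)/D" using assms(2) by (simp add: field_simps)
  then show "c*((d*u - b*v)/D) + d*((a*v - c*u)/D) = v" using assms by simp
qed

lemma inv_lin:
  fixes a b c d :: real
  assumes "a * d - b * c \<noteq> 0"
  shows "inv (\<lambda>(x,y). (a*x + b*y, c*x + d*y)) = (\<lambda>(u,v). ((d*u - b*v) / (a*d - b*c), (a*v - c*u) / (a*d - b*c)))"
proof (rule inv_equality)
  fix z :: "real \<times> real"
  obtain x y where z: "z = (x,y)" by (cases z)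
  show "(\<lambda>(u,v). ((d*u - b*v) / (a*d - b*c), (a*v - c*u) / (a*d - b*c))) ((\<lambda>(x,y). (a*x + b*y, c*x + d*y)) z) = z"
    using assms by (simp add: z field_simps; simp add: algebra_simps)
next
  fix z :: "real \<times> real"
  obtain u v where z: "z = (u,v)" by (cases z)
  show "(\<lambda>(x,y). (a*x + b*y, c*x + d*y)) ((\<lambda>(u,v). ((d*u - b*v) / (a*d - b*c), (a*v - c*u) / (a*d - b*c))) z) = z"
    using lin_inv_aux[OF refl assms, of u v] by (simp add: z)
qed

lemma split_poly:
  fixes z :: real
  assumes "M \<ge> 1"
  shows "(\<Sum>i\<le>M. c i * z ^ i) = c 0 + c 1 * z + (\<Sum>i=2..M. c i * z ^ i)"
proof -
  have "{..M} = insert 0 (insert 1 {2..M})" using assms by auto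
  then show ?thesis by simp
qed

lemma pad_sum:
  fixes z :: real
  shows "(\<Sum>k\<le>N. A k * z ^ k) = (\<Sum>k\<le>N + 2. (if k \<le> N then A k else 0) * z ^ k)"
proof -
  have "(\<Sum>k\<le>N + 2. (if k \<le> N then A k else 0) * z ^ k) = (\<Sum>k\<le>N. (if k \<le> N then A k else 0) * z ^ k)"
    by (rule sum.mono_neutral_right) auto
  then show ?thesis by simp
qed

theorem corollary1:
  fixes a b c d :: real and p q :: poly2
  assumes "poly2 p" and "poly2 q"
    and "jacobian_map a b c d p q"
    and "ord2 p > 1" and "ord2 q > 1"
    and "enat (max (deg2 p) (deg2 q)) < ord2 p + ord2 q - 1
         \<or> (even2 p \<and> even2 q)
         \<or> (odd2 p \<and> even2 q \<and> gap_condition p q)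
         \<or> sym_gap_condition p q"
  shows "shear_map (Phi a b c d p q \<circ> inv (jac0 a b c d p q))"
proof -
  note pp = assms(1) and pq = assms(2)
  define \<Delta> where "\<Delta> = a * d - b * c"
  have \<Delta>0: "\<Delta> \<noteq> 0" using jac_split(1)[OF assms(1-5)] by (simp add: \<Delta>_def)
  have sum0: "\<And>\<mu>. LP a b c d p q \<mu> + JP p q \<mu> = 0" using jac_split(2)[OF assms(1-5)] .
  have sep: "Sep p q" using sep_cases[OF assms(1,2,4,5,6)] .
  have LP0: "\<And>\<mu>. LP a b c d p q \<mu> = 0" using separate(1)[OF sep sum0] .
  have JP0: "\<And>\<mu>. JP p q \<mu> = 0" using separate(2)[OF sep sum0] .
  define K where "K = Kof a b c d p q"
  have pK: "poly2 K" unfolding K_def by (rule poly2_Kof[OF pp pq])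
  have HK: "\<And>\<mu>. HessP K \<mu> = 0" unfolding K_def by (rule Kof_hess[OF pp pq LP0 JP0])
  obtain \<alpha> \<beta> A N e1 e2 where ab: "(\<alpha>, \<beta>) \<noteq> (0, 0)"
    and Kf0: "\<And>x y. eval2 K x y = (\<Sum>k\<le>N. A k * (\<alpha> * x + \<beta> * y) ^ k) + e1 * x + e2 * y"
    using hess_zero_form[OF pK HK] by blast
  define A' where "A' = (\<lambda>k. if k \<le> N then A k else 0)"
  define Bc where "Bc = (\<lambda>i. A' (Suc i) * real (Suc i))"
  define G where "G = (\<lambda>x y. \<Sum>i\<le>Suc N. Bc i * (\<alpha> * x + \<beta> * y) ^ i)"
  have Kf: "eval2 K x y = A' 0 + (\<Sum>i\<le>Suc N. A' (Suc i) * (\<alpha> * x + \<beta> * y) ^ Suc i) + e1 * x + e2 * y" for x y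
  proof -
    have "eval2 K x y = (\<Sum>k\<le>Suc (Suc N). A' k * (\<alpha> * x + \<beta> * y) ^ k) + e1 * x + e2 * y"
      unfolding Kf0 pad_sum[where N=N and A=A] A'_def by simp
    also have "\<dots> = A' 0 + (\<Sum>i\<le>Suc N. A' (Suc i) * (\<alpha> * x + \<beta> * y) ^ Suc i) + e1 * x + e2 * y"
      by (subst sum.atMost_Suc_shift) simp
    finally show ?thesis .
  qed
  have Kx: "eval2 (dx2 K) x y = \<alpha> * G x y + e1" for x y
  proof -
    have "((\<lambda>x. A' 0 + (\<Sum>i\<le>Suc N. A' (Suc i) * (\<alpha> * x + \<beta> * y) ^ Suc i) + e1 * x + e2 * y) has_real_derivative
        (0 + (\<Sum>i\<le>Suc N. A' (Suc i) * (real (Suc i) * (\<alpha> * x + \<beta> * y) ^ i * \<alpha>)) + e1 + 0)) (at x)"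
    proof -
      have d1: "((\<lambda>x. A' (Suc i) * (\<alpha> * x + \<beta> * y) ^ Suc i) has_real_derivative A' (Suc i) * (real (Suc i) * (\<alpha> * x + \<beta> * y) ^ i * \<alpha>)) (at x)" for i
      proof -
        have g: "((\<lambda>x. \<alpha> * x + \<beta> * y) has_real_derivative \<alpha>) (at x)"
          by (rule derivative_eq_intros refl | simp)+
        have "((\<lambda>x. (\<lambda>z. z ^ Suc i) ((\<lambda>x. \<alpha> * x + \<beta> * y) x)) has_real_derivative (real (Suc i) * (\<alpha> * x + \<beta> * y) ^ (Suc i - Suc 0)) * \<alpha>) (at x)"
          by (rule DERIV_chain2[OF DERIV_pow g])
        then have "((\<lambda>x. (\<alpha> * x + \<beta> * y) ^ Suc i) has_real_derivative real (Suc i) * (\<alpha> * x + \<beta> * y) ^ i * \<alpha>) (at x)"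
          by simp
        then show ?thesis by (rule DERIV_cmult)
      qed
      show ?thesis by (intro DERIV_add DERIV_sum d1) (rule derivative_eq_intros refl | simp)+
    qed
    moreover have "(0 + (\<Sum>i\<le>Suc N. A' (Suc i) * (real (Suc i) * (\<alpha> * x + \<beta> * y) ^ i * \<alpha>)) + e1 + 0) = \<alpha> * G x y + e1"
      unfolding G_def Bc_def sum_distrib_left by (simp add: algebra_simps)
    ultimately show ?thesis using DERIV_eval_x[OF pK, of y x] Kf DERIV_unique by fastforce
  qed
  have Ky: "eval2 (dy2 K) x y = \<beta> * G x y + e2" for x y
  proof -
    have "((\<lambda>y. A' 0 + (\<Sum>i\<le>Suc N. A' (Suc i) * (\<alpha> * x + \<beta> * y) ^ Suc i) + e1 * x + e2 * y) has_real_derivative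
        (0 + (\<Sum>i\<le>Suc N. A' (Suc i) * (real (Suc i) * (\<alpha> * x + \<beta> * y) ^ i * \<beta>)) + 0 + e2)) (at y)"
    proof -
      have d1: "((\<lambda>y. A' (Suc i) * (\<alpha> * x + \<beta> * y) ^ Suc i) has_real_derivative A' (Suc i) * (real (Suc i) * (\<alpha> * x + \<beta> * y) ^ i * \<beta>)) (at y)" for i
      proof -
        have "((\<lambda>y. \<alpha> * x + \<beta> * y) has_real_derivative 0 + \<beta>) (at y)"
          by (rule DERIV_add[OF DERIV_const DERIV_cmult_Id])
        then have g: "((\<lambda>y. \<alpha> * x + \<beta> * y) has_real_derivative \<beta>) (at y)" by simp
        have "((\<lambda>y. (\<lambda>z. z ^ Suc i) ((\<lambda>y. \<alpha> * x + \<beta> * y) y)) has_real_derivative (real (Suc i) * (\<alpha> * x + \<beta> * y) ^ (Suc i - Suc 0)) * \<beta>) (at y)"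
          by (rule DERIV_chain2[OF DERIV_pow g])
        then have "((\<lambda>y. (\<alpha> * x + \<beta> * y) ^ Suc i) has_real_derivative real (Suc i) * (\<alpha> * x + \<beta> * y) ^ i * \<beta>) (at y)"
          by simp
        then show ?thesis by (rule DERIV_cmult)
      qed
      show ?thesis by (intro DERIV_add DERIV_sum d1 DERIV_const DERIV_cmult_Id)
    qed
    moreover have "(0 + (\<Sum>i\<le>Suc N. A' (Suc i) * (real (Suc i) * (\<alpha> * x + \<beta> * y) ^ i * \<beta>)) + 0 + e2) = \<beta> * G x y + e2"
      unfolding G_def Bc_def sum_distrib_left by (simp add: algebra_simps)
    ultimately have D2: "((\<lambda>y. A' 0 + (\<Sum>i\<le>Suc N. A' (Suc i) * (\<alpha> * x + \<beta> * y) ^ Suc i) + e1 * x + e2 * y) has_real_derivative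
        \<beta> * G x y + e2) (at y)" by simp
    have fe: "(\<lambda>y. eval2 K x y) = (\<lambda>y. A' 0 + (\<Sum>i\<le>Suc N. A' (Suc i) * (\<alpha> * x + \<beta> * y) ^ Suc i) + e1 * x + e2 * y)"
      using Kf by blast
    from DERIV_eval_y[OF pK, of x y] have "((\<lambda>y. A' 0 + (\<Sum>i\<le>Suc N. A' (Suc i) * (\<alpha> * x + \<beta> * y) ^ Suc i) + e1 * x + e2 * y) has_real_derivative
        eval2 (dy2 K) x y) (at y)" unfolding fe .
    then show ?thesis using D2 DERIV_unique by blast
  qed
  define \<gamma>1 where "\<gamma>1 = (a * \<beta> - b * \<alpha>) / \<Delta>"
  define \<kappa>1 where "\<kappa>1 = (a * e2 - b * e1) / \<Delta>"
  define \<gamma>2 where "\<gamma>2 = (c * \<beta> - d * \<alpha>) / \<Delta>"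
  define \<kappa>2 where "\<kappa>2 = (c * e2 - d * e1) / \<Delta>"
  have pf: "eval2 p x y = \<gamma>1 * G x y + \<kappa>1" and qf: "eval2 q x y = \<gamma>2 * G x y + \<kappa>2" for x y
  proof -
    have e1: "c * eval2 p x y - a * eval2 q x y = \<alpha> * G x y + e1"
      using Kx[of x y] unfolding K_def Kof_dx[OF LP0] by (simp add: eval_lin2 pp pq)
    have e2: "d * eval2 p x y - b * eval2 q x y = \<beta> * G x y + e2"
      using Ky[of x y] unfolding K_def Kof_dy by (simp add: eval_lin2 pp pq)
    have "\<Delta> * eval2 p x y = a * (d * eval2 p x y - b * eval2 q x y) - b * (c * eval2 p x y - a * eval2 q x y)"
      by (simp add: \<Delta>_def algebra_simps)
    also have "\<dots> = \<Delta> * (\<gamma>1 * G x y + \<kappa>1)" unfolding e1 e2 using \<Delta>0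
      by (simp add: \<gamma>1_def \<kappa>1_def field_simps)
    finally show "eval2 p x y = \<gamma>1 * G x y + \<kappa>1" using \<Delta>0 by simp
    have "\<Delta> * eval2 q x y = c * (d * eval2 p x y - b * eval2 q x y) - d * (c * eval2 p x y - a * eval2 q x y)"
      by (simp add: \<Delta>_def algebra_simps)
    also have "\<dots> = \<Delta> * (\<gamma>2 * G x y + \<kappa>2)" unfolding e1 e2 using \<Delta>0
      by (simp add: \<gamma>2_def \<kappa>2_def field_simps)
    finally show "eval2 q x y = \<gamma>2 * G x y + \<kappa>2" using \<Delta>0 by simp
  qed
  define \<alpha>' where "\<alpha>' = (\<alpha> * d - \<beta> * c) / \<Delta>"
  define \<beta>' where "\<beta>' = (\<beta> * a - \<alpha> * b) / \<Delta>"
  have ab': "(\<alpha>', \<beta>') \<noteq> (0, 0)"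
  proof
    assume "(\<alpha>', \<beta>') = (0, 0)"
    then have h1: "\<alpha> * d = \<beta> * c" and h2: "\<beta> * a = \<alpha> * b" using \<Delta>0 by (auto simp: \<alpha>'_def \<beta>'_def)
    have "\<alpha> * \<Delta> = c * (\<beta> * a - \<alpha> * b) + a * (\<alpha> * d - \<beta> * c)" by (simp add: \<Delta>_def algebra_simps)
    then have "\<alpha> * \<Delta> = 0" using h1 h2 by simp
    moreover have "\<beta> * \<Delta> = d * (\<beta> * a - \<alpha> * b) + b * (\<alpha> * d - \<beta> * c)" by (simp add: \<Delta>_def algebra_simps)
    then have "\<beta> * \<Delta> = 0" using h1 h2 by simp
    ultimately show False using \<Delta>0 ab by simp
  qed
  define F where "F = Phi a b c d p q \<circ> inv (jac0 a b c d p q)"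
  have Feq: "F (u, v) = (u + \<gamma>1 * G ((d*u - b*v) / \<Delta>) ((a*v - c*u) / \<Delta>) + \<kappa>1,
                         v + \<gamma>2 * G ((d*u - b*v) / \<Delta>) ((a*v - c*u) / \<Delta>) + \<kappa>2)" for u v
  proof -
    define x where "x = (d*u - b*v) / \<Delta>"
    define y where "y = (a*v - c*u) / \<Delta>"
    have "a * x + b * y = u" "c * x + d * y = v" using lin_inv_aux[OF \<Delta>_def \<Delta>0] unfolding x_def y_def by auto
    moreover have "F (u, v) = (a*x + b*y + eval2 p x y, c*x + d*y + eval2 q x y)"
      unfolding F_def jac0_eq[OF assms(1,2,4,5)] inv_lin[OF \<Delta>0[unfolded \<Delta>_def]]
      by (simp add: Phi_def x_def y_def \<Delta>_def)
    ultimately show ?thesis unfolding pf qf x_def y_def by simp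
  qed
  have Gl: "G ((d*u - b*v) / \<Delta>) ((a*v - c*u) / \<Delta>) = (\<Sum>i\<le>Suc N. Bc i * (\<alpha>' * u + \<beta>' * v) ^ i)" for u v
  proof -
    have "\<alpha> * ((d*u - b*v) / \<Delta>) + \<beta> * ((a*v - c*u) / \<Delta>) = \<alpha>' * u + \<beta>' * v"
      unfolding \<alpha>'_def \<beta>'_def using \<Delta>0 by (simp add: field_simps; simp add: algebra_simps)
    then show ?thesis by (simp add: G_def)
  qed
  have Gs: "(\<Sum>i\<le>Suc N. Bc i * z ^ i) = Bc 0 + Bc 1 * z + (\<Sum>i=2..Suc N. Bc i * z ^ i)" for z :: real
    by (rule split_poly) simp
  show ?thesis
    unfolding shear_map_def F_def[symmetric]
  proof (intro exI conjI allI)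
    show "(\<alpha>', \<beta>') \<noteq> (0, 0)" by (rule ab')
    fix u v
    show "F (u, v) =
      ((\<gamma>1 * Bc 0 + \<kappa>1) + (1 + \<gamma>1 * Bc 1 * \<alpha>') * u + (\<gamma>1 * Bc 1 * \<beta>') * v + (\<Sum>i=2..Suc N. (\<lambda>i. \<gamma>1 * Bc i) i * (\<alpha>' * u + \<beta>' * v) ^ i),
       (\<gamma>2 * Bc 0 + \<kappa>2) + (\<gamma>2 * Bc 1 * \<alpha>') * u + (1 + \<gamma>2 * Bc 1 * \<beta>') * v + (\<Sum>i=2..Suc N. (\<lambda>i. \<gamma>2 * Bc i) i * (\<alpha>' * u + \<beta>' * v) ^ i))"
      unfolding Feq Gl Gs by (simp add: algebra_simps sum_distrib_left)
  qed
qed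


end
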